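(* Let $\mathbb{T}=\mathbb{R}/2\pi\mathbb{Z}$. For $j=1,\dots,m$ let $c_j\in C^\infty(\mathbb{T};\mathbb{C})$ and let $P_j(D_x)$ be a pseudo-differential operator on $\mathbb{T}^n$, $P_j(D_x)u(x)=\sum_{\xi\in\mathbb{Z}^n}e^{ix\cdot\xi}p_j(\xi)\widehat{u}(\xi)$, with $|p_j(\xi)|\le C|\xi|^{\nu_j}$ for all $\xi\in\mathbb{Z}^n$ (some $C>0$, $\nu_j\in\mathbb{R}$). Let $L_j=D_t+c_j(t)P_j(D_x)$ on $\mathbb{T}^{n+1}$, $c_{0,j}=(2\pi)^{-1}\int_0^{2\pi}c_j(t)\,dt$, $L_{0,j}=D_t+c_{0,j}P_j(D_x)$, $L_0=\prod_{j=1}^mL_{0,j}$, and for a permutation $\rho$ of $\{1,\dots,m\}$ let $L_\rho=L_{\rho(1)}\circ\cdots\circ L_{\rho(m)}$. Let $\mathcal{M}_{0,j}(\xi)=(2\pi)^{-1}\int_0^{2\pi}c_j(t)p_j(\xi)\,dt$ and $Z_{\mathcal{M}_j}=\{\xi\in\mathbb{Z}^n:\mathcal{M}_{0,j}(\xi)\in\mathbb{Z}\}$. (a) If $L_\rho$ is globally hypoelliptic for every permutation $\rho$, then $L_0$ is globally hypoelliptic; in particular all sets $Z_{\mathcal{M}_k}$, $k=1,\dots,m$, are finite. (b) If $L_\rho$ is globally hypoelliptic for some permutation $\rho$, then at least one of the operators $L_{0,k}$ is globally hypoelliptic.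
   Context: $D_t=-i\partial_t$; $\widehat{u}(\xi)=(2\pi)^{-n}\int_{\mathbb{T}^n}e^{-ix\cdot\xi}u(x)\,dx$. An operator $\mathcal{P}$ on $\mathbb{T}^N$ is globally hypoelliptic if $u\in\mathcal{D}'(\mathbb{T}^N)$ and $\mathcal{P}u\in C^\infty(\mathbb{T}^N)$ imply $u\in C^\infty(\mathbb{T}^N)$. *)

theory Defs
  imports "HOL-Analysis.Analysis"
begin

text \<open>Distributions on the torus T^(n+1) (variables (t,x), t in T, x in T^n) are
represented by their Fourier coefficients, indexed by (tau, xi) in Z x Z^n.
A coefficient family represents a distribution iff it has polynomial growth,
and a smooth function iff it decays rapidly.\<close>

type_synonym ('n) coef = "int \<times> (int ^ ('n::finite)) \<Rightarrow> complex"

definition inorm :: "int ^ ('n::finite) \<Rightarrow> real" where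
  "inorm \<xi> = sqrt (\<Sum>i\<in>UNIV. (real_of_int (\<xi> $ i))\<^sup>2)"

definition fnorm :: "int \<times> (int ^ ('n::finite)) \<Rightarrow> real" where
  "fnorm \<eta> = sqrt ((real_of_int (fst \<eta>))\<^sup>2 + (inorm (snd \<eta>))\<^sup>2)"

definition is_distribution :: "('n::finite) coef \<Rightarrow> bool" where
  "is_distribution u \<longleftrightarrow> (\<exists>C (k::nat). \<forall>\<eta>. cmod (u \<eta>) \<le> C * (1 + fnorm \<eta>) ^ k)"

definition is_smooth :: "('n::finite) coef \<Rightarrow> bool" where
  "is_smooth u \<longleftrightarrow> (\<forall>k::nat. \<exists>C. \<forall>\<eta>. cmod (u \<eta>) \<le> C * (1 + fnorm \<eta>) powr (- real k))"

definition globally_hypoelliptic :: "(('n::finite) coef \<Rightarrow> ('n::finite) coef) \<Rightarrow> bool" where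
  "globally_hypoelliptic P \<longleftrightarrow>
     (\<forall>u. is_distribution u \<longrightarrow> is_smooth (P u) \<longrightarrow> is_smooth u)"

definition vderiv :: "(real \<Rightarrow> complex) \<Rightarrow> real \<Rightarrow> complex" where
  "vderiv f = (\<lambda>t. vector_derivative f (at t))"

definition smooth_periodic :: "(real \<Rightarrow> complex) \<Rightarrow> bool" where
  "smooth_periodic c \<longleftrightarrow> (\<forall>t. c (t + 2 * pi) = c t) \<and>
     (\<forall>k t. (vderiv ^^ k) c differentiable (at t))"

definition fcoef :: "(real \<Rightarrow> complex) \<Rightarrow> int \<Rightarrow> complex" where
  "fcoef c k = complex_of_real (1 / (2 * pi)) *
      integral {0..2 * pi} (\<lambda>t. exp (- \<i> * of_int k * of_real t) * c t)"

definition mean :: "(real \<Rightarrow> complex) \<Rightarrow> complex" where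
  "mean c = complex_of_real (1 / (2 * pi)) * integral {0..2 * pi} c"

definition Dt :: "('n::finite) coef \<Rightarrow> ('n::finite) coef" where
  "Dt u = (\<lambda>(\<tau>, \<xi>). of_int \<tau> * u (\<tau>, \<xi>))"

definition PDx :: "(int ^ ('n::finite) \<Rightarrow> complex) \<Rightarrow> ('n::finite) coef \<Rightarrow> ('n::finite) coef" where
  "PDx p u = (\<lambda>(\<tau>, \<xi>). p \<xi> * u (\<tau>, \<xi>))"

definition mult_t :: "(real \<Rightarrow> complex) \<Rightarrow> ('n::finite) coef \<Rightarrow> ('n::finite) coef" where
  "mult_t c u = (\<lambda>(\<tau>, \<xi>). infsum (\<lambda>\<sigma>. fcoef c (\<tau> - \<sigma>) * u (\<sigma>, \<xi>)) UNIV)"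

definition Lop :: "(real \<Rightarrow> complex) \<Rightarrow> (int ^ ('n::finite) \<Rightarrow> complex) \<Rightarrow> ('n::finite) coef \<Rightarrow> ('n::finite) coef" where
  "Lop c p u = (\<lambda>\<eta>. Dt u \<eta> + mult_t c (PDx p u) \<eta>)"

definition L0op :: "(real \<Rightarrow> complex) \<Rightarrow> (int ^ ('n::finite) \<Rightarrow> complex) \<Rightarrow> ('n::finite) coef \<Rightarrow> ('n::finite) coef" where
  "L0op c p u = (\<lambda>\<eta>. Dt u \<eta> + mean c * PDx p u \<eta>)"

definition comp_list :: "('a \<Rightarrow> 'a) list \<Rightarrow> 'a \<Rightarrow> 'a" where
  "comp_list fs = foldr (\<circ>) fs id"

end

theory Submission
  imports Defs
begin


definition ee :: "int \<Rightarrow> real \<Rightarrow> complex" where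
  "ee k t = exp (\<i> * of_int k * of_real t)"

lemma ee_cont[continuous_intros]: "continuous_on S (ee k)"
  unfolding ee_def by (intro continuous_intros)

lemma ee_norm[simp]: "norm (ee k t) = 1"
  unfolding ee_def by (simp add: norm_exp_i_times[of "of_int k * t", simplified mult.assoc[symmetric]] )

lemma ee_mult: "ee k t * ee l t = ee (k + l) t"
  unfolding ee_def by (simp add: exp_add[symmetric] algebra_simps)

lemma ee_2pi[simp]: "ee k (2 * pi) = 1"
  unfolding ee_def by (simp add: mult.commute mult.left_commute)

lemma ee_0[simp]: "ee k 0 = 1" "ee 0 t = 1"
  unfolding ee_def by simp_all

lemma ee_zero_fun: "ee 0 = (\<lambda>_. 1)" by (auto simp: ee_def)

lemma fcoef_ee: "fcoef f k = of_real (1/(2*pi)) * integral {0..2*pi} (\<lambda>t. ee (-k) t * f t)"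
  unfolding fcoef_def ee_def by simp

lemma ee_deriv: "((ee k) has_vector_derivative (\<i> * of_int k * ee k t)) (at t within S)"
proof -
  have e: "ee k = (\<lambda>t. exp (t *\<^sub>R (\<i> * of_int k)))"
    by (auto simp: ee_def scaleR_conv_of_real mult_ac)
  show ?thesis unfolding e
    using exp_scaleR_has_vector_derivative_right[of "\<i> * of_int k" t S] by (simp add: mult_ac)
qed

lemma ee_integral: "((ee m) has_integral (if m = 0 then 2 * pi else 0)) {0..2*pi}"
proof (cases "m = 0")
  case True
  then show ?thesis using has_integral_const_real[of "1::complex" 0 "2*pi"] by (simp add: ee_zero_fun scaleR_conv_of_real)
next
  case False
  have "((\<lambda>t. ee m t / (\<i> * of_int m)) has_vector_derivative ee m t) (at t within {0..2*pi})" for t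
    using has_vector_derivative_divide[OF ee_deriv[of m t "{0..2*pi}"], of "\<i> * of_int m"] False
    by simp
  from fundamental_theorem_of_calculus[OF _ this] False show ?thesis by simp
qed

lemma integrable_ee_mult: "continuous_on {0..2*pi} f \<Longrightarrow> (\<lambda>t. ee k t * f t) integrable_on {0..2*pi}"
  by (intro integrable_continuous_real continuous_intros)

lemma fcoef_bound:
  assumes "continuous_on {0..2*pi} f" "\<And>t. t \<in> {0..2*pi} \<Longrightarrow> norm (f t) \<le> B"
  shows "norm (fcoef f k) \<le> B"
proof -
  have B: "0 \<le> B" using assms(2)[of 0] by (auto intro: order_trans[OF norm_ge_zero])
  have "norm (integral {0..2*pi} (\<lambda>t. ee (-k) t * f t)) \<le> B * (2*pi)"
    using has_integral_bound_real[OF B finite.emptyI integrable_integral[OF integrable_ee_mult[OF assms(1)]]]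
    by (auto simp: norm_mult assms(2))
  then show ?thesis unfolding fcoef_ee
    by (simp add: norm_mult norm_divide field_simps)
qed

lemma fcoef_add: "continuous_on {0..2*pi} f \<Longrightarrow> continuous_on {0..2*pi} g \<Longrightarrow>
   fcoef (\<lambda>t. f t + g t) k = fcoef f k + fcoef g k"
  unfolding fcoef_ee by (simp add: distrib_left integral_add integrable_ee_mult)

lemma fcoef_diff: "continuous_on {0..2*pi} f \<Longrightarrow> continuous_on {0..2*pi} g \<Longrightarrow>
   fcoef (\<lambda>t. f t - g t) k = fcoef f k - fcoef g k"
  unfolding fcoef_ee by (simp add: right_diff_distrib integral_diff integrable_ee_mult)

lemma fcoef_cmult: "fcoef (\<lambda>t. a * f t) k = a * fcoef f k"
  unfolding fcoef_ee by (simp add: mult.left_commute[of _ a])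

lemma fcoef_sum: "finite F \<Longrightarrow> (\<And>i. i \<in> F \<Longrightarrow> continuous_on {0..2*pi} (f i)) \<Longrightarrow>
   fcoef (\<lambda>t. \<Sum>i\<in>F. f i t) k = (\<Sum>i\<in>F. fcoef (f i) k)"
  unfolding fcoef_ee by (simp add: sum_distrib_left integral_sum integrable_ee_mult)

lemma fcoef_ee_mult: "fcoef (\<lambda>t. ee j t * f t) k = fcoef f (k - j)"
  unfolding fcoef_ee by (simp add: mult.assoc[symmetric] ee_mult)

lemma fcoef_ee_self: "fcoef (ee j) k = (if j = k then 1 else 0)"
proof -
  have "fcoef (ee j) k = of_real (1/(2*pi)) * integral {0..2*pi} (ee (j - k))"
    unfolding fcoef_ee by (simp add: ee_mult)
  also have "\<dots> = (if j = k then 1 else 0)"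
    using ee_integral[of "j-k"] by (simp add: integral_unique)
  finally show ?thesis .
qed

lemma fcoef_ibp:
  assumes der: "\<And>t. t \<in> {0..2*pi} \<Longrightarrow> (f has_vector_derivative f' t) (at t within {0..2*pi})"
    and cf': "continuous_on {0..2*pi} f'" and per: "f 0 = f (2*pi)"
  shows "fcoef f' k = \<i> * of_int k * fcoef f k"
proof -
  have cf: "continuous_on {0..2*pi} f"
    using der by (meson continuous_on_vector_derivative)
  have "((\<lambda>t. ee (-k) t * f t) has_vector_derivative
          (ee (-k) t * f' t + (\<i> * of_int (-k) * ee (-k) t) * f t)) (at t within {0..2*pi})"
    if "t \<in> {0..2*pi}" for t
    by (rule has_vector_derivative_mult[OF ee_deriv der[OF that]])
  from fundamental_theorem_of_calculus[OF _ this] per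
  have "((\<lambda>t. ee (-k) t * f' t + (\<i> * of_int (-k) * ee (-k) t) * f t) has_integral 0) {0..2*pi}"
    by simp
  then have "integral {0..2*pi} (\<lambda>t. ee (-k) t * f' t + (\<i> * of_int (-k)) * (ee (-k) t * f t)) = 0"
    by (simp add: integral_unique mult.assoc)
  then have "integral {0..2*pi} (\<lambda>t. ee (-k) t * f' t) + (\<i> * of_int (-k)) * integral {0..2*pi} (\<lambda>t. ee (-k) t * f t) = 0"
    by (subst (asm) integral_add) (auto intro!: integrable_ee_mult cf cf' integrable_on_mult_right integrable_neg simp: integral_mult_right)
  then show ?thesis unfolding fcoef_ee by (simp add: algebra_simps)
qed


definition tp :: "(real \<Rightarrow> complex) \<Rightarrow> bool" where
  "tp \<phi> \<longleftrightarrow> (\<exists>K a. finite K \<and> (\<forall>t. \<phi> t = (\<Sum>k\<in>K. a k * ee k t)))"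

lemma tp_ee: "tp (\<lambda>t. a * ee k t)"
  unfolding tp_def by (rule exI[of _ "{k}"], rule exI[of _ "\<lambda>_. a"]) simp

lemma tp_const: "tp (\<lambda>t. a)"
  using tp_ee[of a 0] by simp

lemma tp_add: assumes "tp \<phi>" "tp \<psi>" shows "tp (\<lambda>t. \<phi> t + \<psi> t)"
proof -
  obtain K a where K: "finite K" "\<And>t. \<phi> t = (\<Sum>k\<in>K. a k * ee k t)" using assms(1) unfolding tp_def by blast
  obtain L b where L: "finite L" "\<And>t. \<psi> t = (\<Sum>k\<in>L. b k * ee k t)" using assms(2) unfolding tp_def by blast
  define a' where "a' k = (if k \<in> K then a k else 0)" for k
  define b' where "b' k = (if k \<in> L then b k else 0)" for k
  have fin: "finite (K \<union> L)" using K L by simp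
  have 1: "(\<Sum>k\<in>K. a k * ee k t) = (\<Sum>k\<in>K \<union> L. a' k * ee k t)" for t
    by (rule sum.mono_neutral_cong_left[OF fin]) (auto simp: a'_def)
  have 2: "(\<Sum>k\<in>L. b k * ee k t) = (\<Sum>k\<in>K \<union> L. b' k * ee k t)" for t
    by (rule sum.mono_neutral_cong_left[OF fin]) (auto simp: b'_def)
  have "\<phi> t + \<psi> t = (\<Sum>k\<in>K \<union> L. (a' k + b' k) * ee k t)" for t
    unfolding K(2) L(2) 1 2 by (simp add: sum.distrib distrib_right)
  then show ?thesis unfolding tp_def using fin
    by (intro exI[where x="K \<union> L"] exI[where x="\<lambda>k. a' k + b' k"]) auto
qed

lemma tp_sum: "finite F \<Longrightarrow> (\<And>i. i \<in> F \<Longrightarrow> tp (f i)) \<Longrightarrow> tp (\<lambda>t. \<Sum>i\<in>F. f i t)"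
  by (induction F rule: finite_induct) (auto intro: tp_add tp_const)

lemma tp_ee_mult: assumes "tp \<psi>" shows "tp (\<lambda>t. a * ee j t * \<psi> t)"
proof -
  obtain L b where L: "finite L" "\<And>t. \<psi> t = (\<Sum>k\<in>L. b k * ee k t)" using assms unfolding tp_def by blast
  have "a * ee j t * \<psi> t = (\<Sum>k\<in>L. (a * b k) * ee (j + k) t)" for t
    by (simp add: L(2) sum_distrib_left ee_mult[symmetric] mult_ac)
  then show ?thesis
    using tp_sum[OF L(1), of "\<lambda>k t. (a * b k) * ee (j + k) t"] tp_ee by simp
qed

lemma tp_mult: assumes "tp \<phi>" "tp \<psi>" shows "tp (\<lambda>t. \<phi> t * \<psi> t)"
proof -
  obtain K a where K: "finite K" "\<And>t. \<phi> t = (\<Sum>k\<in>K. a k * ee k t)" using assms(1) unfolding tp_def by blast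
  have "\<phi> t * \<psi> t = (\<Sum>k\<in>K. a k * ee k t * \<psi> t)" for t
    by (simp add: K(2) sum_distrib_right)
  then show ?thesis using tp_sum[OF K(1), of "\<lambda>k t. a k * ee k t * \<psi> t"] tp_ee_mult[OF assms(2)] by simp
qed

lemma tp_rpf:
  fixes q :: "complex \<Rightarrow> real"
  assumes "real_polynomial_function q"
  shows "tp (\<lambda>t. complex_of_real (q (cis t)))"
  using assms
proof (induction q rule: real_polynomial_function.induct)
  case (linear f)
  have lin: "linear f" using linear.hyps bounded_linear.linear by blast
  have z: "z = Re z *\<^sub>R 1 + Im z *\<^sub>R \<i>" for z :: complex
    by (simp add: complex_eq_iff)
  have fz: "f z = Re z * f 1 + Im z * f \<i>" for z
  proof -
    have "f z = f (Re z *\<^sub>R 1 + Im z *\<^sub>R \<i>)" by (rule arg_cong[where f=f], rule z)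
    also have "\<dots> = Re z * f 1 + Im z * f \<i>" by (simp add: linear_add[OF lin] linear_scale[OF lin])
    finally show ?thesis .
  qed
  have c: "complex_of_real (cos t) = (ee 1 t + ee (-1) t) / 2" for t
    unfolding ee_def cos_of_real[symmetric] cos_exp_eq by simp
  have s: "complex_of_real (sin t) = (ee 1 t - ee (-1) t) / (2 * \<i>)" for t
    unfolding ee_def sin_of_real[symmetric] sin_exp_eq by simp
  have "complex_of_real (f (cis t)) =
      of_real (f 1) / 2 * ee 1 t + (of_real (f 1) / 2 * ee (-1) t +
      (of_real (f \<i>) / (2 * \<i>) * ee 1 t + (- (of_real (f \<i>) / (2 * \<i>))) * ee (-1) t))" for t
  proof -
    have "complex_of_real (f (cis t)) = of_real (cos t) * of_real (f 1) + of_real (sin t) * of_real (f \<i>)"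
      by (subst fz) simp
    also have "\<dots> = (ee 1 t + ee (-1) t) / 2 * of_real (f 1) + (ee 1 t - ee (-1) t) / (2 * \<i>) * of_real (f \<i>)"
      by (simp only: c s)
    also have "\<dots> = of_real (f 1) / 2 * ee 1 t + (of_real (f 1) / 2 * ee (-1) t +
      (of_real (f \<i>) / (2 * \<i>) * ee 1 t + (- (of_real (f \<i>) / (2 * \<i>))) * ee (-1) t))"
      by (simp add: field_simps)
    finally show ?thesis .
  qed
  moreover have "tp (\<lambda>t. of_real (f 1) / 2 * ee 1 t + (of_real (f 1) / 2 * ee (-1) t +
      (of_real (f \<i>) / (2 * \<i>) * ee 1 t + (- (of_real (f \<i>) / (2 * \<i>))) * ee (-1) t)))"
    by (intro tp_add tp_ee)
  ultimately show ?case by simp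
next
  case (const c)
  then show ?case by (simp add: tp_const)
next
  case (add f g)
  then show ?case by (simp add: tp_add)
next
  case (mult f g)
  then show ?case by (simp add: tp_mult)
qed

lemma tp_pf:
  fixes P :: "complex \<Rightarrow> complex"
  assumes "polynomial_function P"
  shows "tp (\<lambda>t. P (cis t))"
proof -
  have "real_polynomial_function (Re o P)" "real_polynomial_function (Im o P)"
    using assms bounded_linear_Re bounded_linear_Im unfolding polynomial_function_def by blast+
  from tp_rpf[OF this(1)] tp_rpf[OF this(2)]
  have "tp (\<lambda>t. complex_of_real (Re (P (cis t))) + \<i> * complex_of_real (Im (P (cis t))))"
    by (intro tp_add tp_mult tp_const) auto
  moreover have "complex_of_real (Re z) + \<i> * complex_of_real (Im z) = z" for z
    by (simp add: complex_eq_iff)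
  ultimately show ?thesis by simp
qed


lemma integral_ee_fcoef: "integral {0..2*pi} (\<lambda>t. ee k t * h t) = 2 * pi * fcoef h (-k)"
  unfolding fcoef_ee by simp

lemma tp_orth:
  assumes h: "continuous_on {0..2*pi} h" and z: "\<And>k. fcoef h k = 0" and "tp \<phi>"
  shows "integral {0..2*pi} (\<lambda>t. \<phi> t * h t) = 0"
proof -
  obtain K a where K: "finite K" "\<And>t. \<phi> t = (\<Sum>k\<in>K. a k * ee k t)" using assms(3) unfolding tp_def by blast
  have "integral {0..2*pi} (\<lambda>t. \<phi> t * h t) = integral {0..2*pi} (\<lambda>t. \<Sum>k\<in>K. a k * (ee k t * h t))"
    by (simp add: K(2) sum_distrib_right mult.assoc)
  also have "\<dots> = (\<Sum>k\<in>K. integral {0..2*pi} (\<lambda>t. a k * (ee k t * h t)))"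
    by (rule integral_sum[OF K(1)]) (auto intro!: integrable_on_mult_right integrable_ee_mult h)
  also have "\<dots> = 0"
    by (simp add: integral_ee_fcoef z)
  finally show ?thesis .
qed

lemma cis_sphere: "cis ` {0..2*pi} = sphere 0 1"
proof
  show "cis ` {0..2*pi} \<subseteq> sphere 0 1" by auto
  show "sphere 0 1 \<subseteq> cis ` {0..2*pi}"
  proof
    fix z :: complex assume "z \<in> sphere 0 1"
    then have n: "norm z = 1" by simp
    have "is_Arg z (Arg2pi z)" "0 \<le> Arg2pi z" "Arg2pi z < 2*pi" using Arg2pi by auto
    then have "z = cis (Arg2pi z)" using n unfolding is_Arg_def by (simp add: cis_conv_exp)
    then show "z \<in> cis ` {0..2*pi}" using \<open>0 \<le> Arg2pi z\<close> \<open>Arg2pi z < 2*pi\<close> by auto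
  qed
qed

lemma cis_inj_2pi:
  assumes "s \<in> {0..2*pi}" "t \<in> {0..2*pi}" "cis s = cis t"
  shows "s = t \<or> (s = 0 \<and> t = 2*pi) \<or> (s = 2*pi \<and> t = 0)"
proof (cases "\<bar>s - t\<bar> < 2*pi")
  case True
  have "is_Arg (cis t) s" "is_Arg (cis t) t" using assms(3)
    by (auto simp: is_Arg_def cis_conv_exp)
  from is_Arg_eqI[OF this True] show ?thesis by simp
next
  case False
  then show ?thesis using assms(1,2) by auto
qed

lemma fcoef_zero_imp_zero:
  assumes h: "continuous_on {0..2*pi} h" and per: "h 0 = h (2*pi)" and z: "\<And>k. fcoef h k = 0"
    and t: "t \<in> {0..2*pi}"
  shows "h t = 0"
proof -
  define F where "F z = cnj (h (SOME t. t \<in> {0..2*pi} \<and> cis t = z))" for z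
  have Fcis: "F (cis t) = cnj (h t)" if "t \<in> {0..2*pi}" for t
  proof -
    have "\<exists>s. s \<in> {0..2*pi} \<and> cis s = cis t" using that by blast
    then have s: "(SOME s. s \<in> {0..2*pi} \<and> cis s = cis t) \<in> {0..2*pi}"
      "cis (SOME s. s \<in> {0..2*pi} \<and> cis s = cis t) = cis t"
      by (metis (mono_tags, lifting) someI_ex)+
    from cis_inj_2pi[OF s(1) that s(2)] have "h (SOME s. s \<in> {0..2*pi} \<and> cis s = cis t) = h t"
      using per by auto
    then show ?thesis by (simp add: F_def)
  qed
  have cF: "continuous_on (sphere 0 1) F"
  proof (rule continuous_from_closed_graph[of "cnj ` h ` {0..2*pi}"])
    show "compact (cnj ` h ` {0..2*pi})"
      by (intro compact_continuous_image h continuous_intros) auto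
    show "F \<in> sphere 0 1 \<rightarrow> cnj ` h ` {0..2*pi}"
    proof
      fix z :: complex assume "z \<in> sphere 0 1"
      then obtain t where "t \<in> {0..2*pi}" "z = cis t" using cis_sphere by blast
      then show "F z \<in> cnj ` h ` {0..2*pi}" using Fcis by auto
    qed
    have "(\<lambda>x. (x, F x)) ` sphere 0 1 = (\<lambda>t. (cis t, cnj (h t))) ` {0..2*pi}"
      unfolding cis_sphere[symmetric] image_image using Fcis by (auto simp: image_iff)
    moreover have "compact ((\<lambda>t. (cis t, cnj (h t))) ` {0..2*pi})"
      by (intro compact_continuous_image continuous_on_Pair continuous_intros h) auto
    ultimately show "closed ((\<lambda>x. (x, F x)) ` sphere 0 1)"
      by (simp add: compact_imp_closed)
  qed
  obtain M where M: "\<And>t. t \<in> {0..2*pi} \<Longrightarrow> norm (h t) \<le> M"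
    using compact_imp_bounded[OF compact_continuous_image[OF h compact_Icc]]
    unfolding bounded_iff by (metis atLeastAtMost_iff image_eqI)
  have M0: "0 \<le> M" using M[of 0] by (auto intro: order_trans[OF norm_ge_zero])
  define I where "I = integral {0..2*pi} (\<lambda>t. cnj (h t) * h t)"
  have Ibound: "norm I \<le> e * M * (2*pi)" if e: "e > 0" for e
  proof -
    obtain P where P: "polynomial_function P" "\<And>z. z \<in> sphere 0 1 \<Longrightarrow> norm (F z - P z) < e"
      using Stone_Weierstrass_polynomial_function[OF compact_sphere cF e] by blast
    have cP: "continuous_on {0..2*pi} (\<lambda>t. P (cis t))"
      by (intro continuous_on_compose2[OF continuous_on_polymonial_function[OF P(1)]] continuous_intros) auto
    have 0: "integral {0..2*pi} (\<lambda>t. P (cis t) * h t) = 0"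
      by (rule tp_orth[OF h z tp_pf[OF P(1)]])
    have "I = integral {0..2*pi} (\<lambda>t. (cnj (h t) - P (cis t)) * h t + P (cis t) * h t)"
      unfolding I_def by (simp add: algebra_simps)
    also have "\<dots> = integral {0..2*pi} (\<lambda>t. (cnj (h t) - P (cis t)) * h t)"
      using 0 by (subst integral_add) (auto intro!: integrable_continuous_real continuous_intros h cP)
    finally have "I = integral {0..2*pi} (\<lambda>t. (cnj (h t) - P (cis t)) * h t)" .
    moreover have "norm (integral {0..2*pi} (\<lambda>t. (cnj (h t) - P (cis t)) * h t)) \<le> (e * M) * (2*pi)"
    proof -
      have "norm ((cnj (h t) - P (cis t)) * h t) \<le> e * M" if "t \<in> {0..2*pi}" for t
      proof -
        have "norm (cnj (h t) - P (cis t)) < e" using P(2)[of "cis t"] Fcis[OF that] by simp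
        then show ?thesis unfolding norm_mult using e
          by (intro mult_mono M that) auto
      qed
      moreover have "continuous_on {0..2 * pi} (\<lambda>t. (cnj (h t) - P (cis t)) * h t)"
        by (intro continuous_intros h cP)
      ultimately show ?thesis
        using has_integral_bound_real[OF _ finite.emptyI integrable_integral[OF integrable_continuous_real], of "e*M" 0 "2*pi"
            "\<lambda>t. (cnj (h t) - P (cis t)) * h t"] e M0
        by auto
    qed
    ultimately show ?thesis by simp
  qed
  have I0: "I = 0"
  proof (rule ccontr)
    assume "I \<noteq> 0"
    then have pos: "norm I > 0" by simp
    define e where "e = norm I / (2 * (M + 1) * (2*pi))"
    have e: "e > 0" using pos M0 by (simp add: e_def)
    have "norm I \<le> e * M * (2*pi)" by (rule Ibound[OF e])
    also have "\<dots> < e * (M + 1) * (2*pi)" using e by simp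
    also have "\<dots> = norm I / 2"
    proof -
      have "(M + 1) * (2*pi) \<noteq> 0" using M0 by simp
      then show ?thesis unfolding e_def by (simp add: field_simps)
    qed
    finally show False using pos by simp
  qed
  have ch: "continuous_on {0..2*pi} (\<lambda>t. (norm (h t))\<^sup>2)" by (intro continuous_intros h)
  have "((\<lambda>t. complex_of_real ((norm (h t))\<^sup>2)) has_integral of_real (integral {0..2*pi} (\<lambda>t. (norm (h t))\<^sup>2))) {0..2*pi}"
    by (rule has_integral_of_real[OF integrable_integral[OF integrable_continuous_real[OF ch]]])
  moreover have "(\<lambda>t. complex_of_real ((norm (h t))\<^sup>2)) = (\<lambda>t. cnj (h t) * h t)"
    by (rule ext, subst complex_norm_square, simp add: mult.commute)
  ultimately have "of_real (integral {0..2*pi} (\<lambda>t. (norm (h t))\<^sup>2)) = I"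
    unfolding I_def by (simp add: integral_unique)
  then have "((\<lambda>t. (norm (h t))\<^sup>2) has_integral 0) {0..2*pi}"
    using I0 integrable_integral[OF integrable_continuous_real[OF ch]] by simp
  from has_integral_0_cbox_imp_0[of 0 "2*pi" "\<lambda>t. (norm (h t))\<^sup>2" t] this ch t
  show ?thesis using pi_gt_zero by simp
qed


definition wZ :: "int \<Rightarrow> real" where "wZ k = 1 / (1 + real_of_int \<bar>k\<bar>)\<^sup>2"

lemma wZ_pos: "wZ k > 0" unfolding wZ_def by (simp add: add_pos_nonneg)

lemma wZ_summable: "wZ summable_on UNIV"
proof -
  have s: "summable (\<lambda>n. 1 / (1 + real n)\<^sup>2)"
    using inverse_power_summable[of 2, where 'a=real] summable_Suc_iff[of "\<lambda>n. inverse (real n ^ 2)"]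
    by (simp add: divide_inverse add.commute)
  have sn: "(\<lambda>n::nat. 1 / (1 + real n)\<^sup>2) summable_on UNIV"
    by (rule norm_summable_imp_summable_on) (use s in simp)
  have "(wZ \<circ> int) summable_on UNIV" using sn by (simp add: wZ_def o_def)
  then have 1: "wZ summable_on (range int)" by (subst summable_on_reindex) auto
  have "(wZ \<circ> (\<lambda>n. - int n)) summable_on UNIV" using sn by (simp add: wZ_def o_def)
  then have 2: "wZ summable_on (range (\<lambda>n. - int n))" by (subst summable_on_reindex) (auto simp: inj_on_def)
  have "UNIV = range int \<union> range (\<lambda>n. - int n)"
  proof -
    have "k \<in> range int \<union> range (\<lambda>n. - int n)" for k :: int
    proof (cases "k \<ge> 0")
      case True
      then have "k = int (nat k)" by simp
      then show ?thesis by blast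
    next
      case False
      then have "k = - int (nat (-k))" by simp
      then show ?thesis by blast
    qed
    then show ?thesis by auto
  qed
  then show ?thesis using summable_on_union[OF 1 2] by simp
qed

definition ZZ :: real where "ZZ = infsum wZ UNIV"

lemma ZZ_pos: "ZZ \<ge> 0" unfolding ZZ_def by (intro infsum_nonneg) (simp add: less_imp_le wZ_pos)

lemma wZ_shift_summable: "(\<lambda>k. wZ (a - k)) summable_on UNIV" "(\<lambda>k. wZ (k - a)) summable_on UNIV"
proof -
  have b1: "bij_betw (\<lambda>k. a - k) UNIV UNIV" by (rule bij_betwI[of _ _ _ "\<lambda>k. a - k"]) auto
  have b2: "bij_betw (\<lambda>k. k - a) UNIV UNIV" by (rule bij_betwI[of _ _ _ "\<lambda>k. k + a"]) auto
  show "(\<lambda>k. wZ (a - k)) summable_on UNIV" using summable_on_reindex_bij_betw[OF b1] wZ_summable by blast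
  show "(\<lambda>k. wZ (k - a)) summable_on UNIV" using summable_on_reindex_bij_betw[OF b2] wZ_summable by blast
qed

lemma wZ_shift_infsum: "infsum (\<lambda>k. wZ (a - k)) UNIV = ZZ" "infsum (\<lambda>k. wZ (k - a)) UNIV = ZZ"
proof -
  have b1: "bij_betw (\<lambda>k. a - k) UNIV UNIV" by (rule bij_betwI[of _ _ _ "\<lambda>k. a - k"]) auto
  have b2: "bij_betw (\<lambda>k. k - a) UNIV UNIV" by (rule bij_betwI[of _ _ _ "\<lambda>k. k + a"]) auto
  show "infsum (\<lambda>k. wZ (a - k)) UNIV = ZZ" unfolding ZZ_def using infsum_reindex_bij_betw[OF b1] by blast
  show "infsum (\<lambda>k. wZ (k - a)) UNIV = ZZ" unfolding ZZ_def using infsum_reindex_bij_betw[OF b2] by blast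
qed

lemma dom_summable:
  fixes f :: "int \<Rightarrow> complex"
  assumes "\<And>k. norm (f k) \<le> B * wZ (a - k)"
  shows "(\<lambda>k. norm (f k)) summable_on UNIV" "norm (infsum f UNIV) \<le> B * ZZ"
proof -
  have s: "(\<lambda>k. B * wZ (a - k)) summable_on UNIV"
    using summable_on_cmult_right[OF wZ_shift_summable(1)] by blast
  show as: "(\<lambda>k. norm (f k)) summable_on UNIV"
    by (rule Infinite_Sum.abs_summable_on_comparison_test'[OF s]) (use assms in auto)
  have "norm (infsum f UNIV) \<le> infsum (\<lambda>k. norm (f k)) UNIV"
    by (rule norm_infsum_bound[OF as])
  also have "\<dots> \<le> infsum (\<lambda>k. B * wZ (a - k)) UNIV"
    by (rule infsum_mono[OF as s]) (use assms in auto)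
  also have "\<dots> = B * ZZ" by (simp add: infsum_cmult_right'[of B] wZ_shift_infsum)
  finally show "norm (infsum f UNIV) \<le> B * ZZ" .
qed

lemma tail_bound:
  fixes f :: "int \<Rightarrow> complex"
  assumes as: "(\<lambda>k. norm (f k)) summable_on UNIV" and F: "finite F"
  shows "norm (infsum f UNIV - sum f F) \<le> infsum (\<lambda>k. norm (f k)) (UNIV - F)"
proof -
  have sf: "f summable_on UNIV" using abs_summable_summable[OF as] .
  have s1: "f summable_on (UNIV - F)" by (rule summable_on_subset_banach[OF sf]) auto
  have "infsum f UNIV = infsum f (F \<union> (UNIV - F))" by simp
  also have "\<dots> = infsum f F + infsum f (UNIV - F)"
    by (rule infsum_Un_disjoint) (use F s1 in auto)
  finally have "infsum f UNIV - sum f F = infsum f (UNIV - F)" using F by simp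
  moreover have "(\<lambda>k. norm (f k)) summable_on (UNIV - F)"
    by (rule summable_on_subset_banach[OF as]) auto
  ultimately show ?thesis using norm_infsum_bound by metis
qed

lemma tail_small:
  fixes g :: "int \<Rightarrow> real"
  assumes s: "g summable_on UNIV" and nn: "\<And>k. g k \<ge> 0" and e: "e > 0"
  shows "\<exists>F0. finite F0 \<and> (\<forall>F. finite F \<longrightarrow> F0 \<subseteq> F \<longrightarrow> infsum g (UNIV - F) < e)"
proof -
  obtain F0 where F0: "finite F0" "dist (sum g F0) (infsum g UNIV) \<le> e/2"
    using infsum_finite_approximation[OF s, of "e/2"] e by auto
  have "infsum g (UNIV - F) < e" if "finite F" "F0 \<subseteq> F" for F
  proof -
    have s1: "g summable_on (UNIV - F)" by (rule summable_on_subset_banach[OF s]) auto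
    have "infsum g UNIV = infsum g (F \<union> (UNIV - F))" by simp
    also have "\<dots> = infsum g F + infsum g (UNIV - F)"
      by (rule infsum_Un_disjoint) (use that s1 in auto)
    finally have eq: "infsum g (UNIV - F) = infsum g UNIV - sum g F" using that by simp
    have "sum g F0 \<le> sum g F" by (rule sum_mono2) (use that nn in auto)
    moreover have "sum g F \<le> infsum g UNIV"
      by (rule finite_sum_le_infsum[OF s]) (use that nn in auto)
    ultimately show ?thesis using eq F0(2) e by (auto simp: dist_real_def)
  qed
  then show ?thesis using F0(1) by blast
qed


lemma norm_lt_all_eq: fixes x y :: complex assumes "\<And>e. e > 0 \<Longrightarrow> norm (x - y) < e" shows "x = y"
  using assms[of "norm (x - y)"] by (cases "x = y") auto

lemma fcoef_partial_sum:
  assumes "finite F" "k \<in> F"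
  shows "fcoef (\<lambda>t. \<Sum>j\<in>F. a j * ee j t) k = a k"
proof -
  have "fcoef (\<lambda>t. \<Sum>j\<in>F. a j * ee j t) k = (\<Sum>j\<in>F. fcoef (\<lambda>t. a j * ee j t) k)"
    by (rule fcoef_sum[OF assms(1)]) (intro continuous_intros)
  also have "\<dots> = (\<Sum>j\<in>F. a j * (if j = k then 1 else 0))"
    by (simp add: fcoef_cmult fcoef_ee_self)
  also have "\<dots> = a k" using assms by (simp add: if_distrib sum.delta' cong: if_cong)
  finally show ?thesis .
qed

lemma fourier_inversion_aux:
  assumes f: "continuous_on {0..2*pi} f" and per: "f 0 = f (2*pi)"
    and as: "(\<lambda>k. norm (fcoef f k)) summable_on UNIV"
  shows "\<forall>t\<in>{0..2*pi}. f t = infsum (\<lambda>k. fcoef f k * ee k t) UNIV"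
proof -
  define g where "g t = infsum (\<lambda>k. fcoef f k * ee k t) UNIV" for t
  define S where "S F t = (\<Sum>k\<in>F. fcoef f k * ee k t)" for F t
  define T where "T F = infsum (\<lambda>k. norm (fcoef f k)) (UNIV - F)" for F
  have asg: "(\<lambda>k. norm (fcoef f k * ee k t)) summable_on UNIV" for t
    using as by (simp add: norm_mult)
  have gS: "norm (g t - S F t) \<le> T F" if "finite F" for F t
    using tail_bound[OF asg that, of t] unfolding g_def S_def T_def by (simp add: norm_mult)
  have small: "\<exists>F0. finite F0 \<and> (\<forall>F. finite F \<longrightarrow> F0 \<subseteq> F \<longrightarrow> T F < e)" if "e > 0" for e
    unfolding T_def by (rule tail_small[OF as _ that]) simp
  have cS: "continuous_on {0..2*pi} (S F)" for F
    unfolding S_def by (intro continuous_intros)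
  have cg: "continuous_on {0..2*pi} g"
  proof (rule uniform_limit_theorem[where F="finite_subsets_at_top UNIV" and f=S])
    show "\<forall>\<^sub>F n in finite_subsets_at_top UNIV. continuous_on {0..2 * pi} (S n)"
      using cS by simp
    show "uniform_limit {0..2 * pi} S g (finite_subsets_at_top UNIV)"
      unfolding uniform_limit_iff
    proof (intro allI impI)
      fix e :: real assume e: "e > 0"
      obtain F0 where F0: "finite F0" "\<And>F. finite F \<Longrightarrow> F0 \<subseteq> F \<Longrightarrow> T F < e"
        using small[OF e] by blast
      show "\<forall>\<^sub>F n in finite_subsets_at_top UNIV. \<forall>x\<in>{0..2 * pi}. dist (S n x) (g x) < e"
        unfolding eventually_finite_subsets_at_top
      proof (intro exI[of _ F0] conjI allI impI ballI)
        fix Y x assume Y: "finite Y \<and> F0 \<subseteq> Y \<and> Y \<subseteq> UNIV" and x: "x \<in> {0..2*pi}"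
        have "dist (S Y x) (g x) = norm (g x - S Y x)" by (simp add: dist_commute dist_norm)
        also have "\<dots> \<le> T Y" using gS Y by blast
        also have "\<dots> < e" using F0(2) Y by blast
        finally show "dist (S Y x) (g x) < e" .
      qed (use F0 in auto)
    qed
    show "\<not> trivial_limit (finite_subsets_at_top (UNIV :: int set))"
      by (simp add: finite_subsets_at_top_neq_bot)
  qed
  have gper: "g 0 = g (2*pi)" unfolding g_def by simp
  have cf: "fcoef g k = fcoef f k" for k
  proof (rule norm_lt_all_eq)
    fix e :: real assume e: "e > 0"
    obtain F0 where F0: "finite F0" "\<And>F. finite F \<Longrightarrow> F0 \<subseteq> F \<Longrightarrow> T F < e"
      using small[OF e] by blast
    define F where "F = insert k F0"
    have F: "finite F" "k \<in> F" "F0 \<subseteq> F" using F0 by (auto simp: F_def)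
    have "fcoef (S F) k = fcoef f k" unfolding S_def by (rule fcoef_partial_sum[OF F(1,2)])
    then have "fcoef g k - fcoef f k = fcoef (\<lambda>t. g t - S F t) k"
      using fcoef_diff[OF cg cS] by simp
    also have "norm \<dots> \<le> T F" by (rule fcoef_bound) (auto intro!: continuous_intros cg cS gS F)
    also have "\<dots> < e" using F0(2)[OF F(1,3)] .
    finally show "norm (fcoef g k - fcoef f k) < e" .
  qed
  have "f t - g t = 0" if "t \<in> {0..2*pi}" for t
  proof (rule fcoef_zero_imp_zero[where h="\<lambda>t. f t - g t", OF _ _ _ that])
    show "continuous_on {0..2 * pi} (\<lambda>t. f t - g t)" by (intro continuous_intros f cg)
    show "f 0 - g 0 = f (2 * pi) - g (2 * pi)" using per gper by simp
    show "fcoef (\<lambda>t. f t - g t) k = 0" for k using fcoef_diff[OF f cg] cf by simp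
  qed
  then show ?thesis unfolding g_def by simp
qed

lemma fourier_inversion:
  assumes "continuous_on {0..2*pi} f" "f 0 = f (2*pi)"
    "(\<lambda>k. norm (fcoef f k)) summable_on UNIV" "t \<in> {0..2*pi}"
  shows "f t = infsum (\<lambda>k. fcoef f k * ee k t) UNIV"
  using fourier_inversion_aux[OF assms(1-3)] assms(4) by blast

lemma fourier_partial_bound:
  assumes f: "continuous_on {0..2*pi} f" "f 0 = f (2*pi)"
    and as: "(\<lambda>k. norm (fcoef f k)) summable_on UNIV" and t: "t \<in> {0..2*pi}" and F: "finite F"
  shows "norm (f t - (\<Sum>k\<in>F. fcoef f k * ee k t)) \<le> infsum (\<lambda>k. norm (fcoef f k)) (UNIV - F)"
proof -
  have asg: "(\<lambda>k. norm (fcoef f k * ee k t)) summable_on UNIV"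
    using as by (simp add: norm_mult)
  show ?thesis using tail_bound[OF asg F] fourier_inversion[OF f as t] by (simp add: norm_mult)
qed

lemma bounded_on_interval:
  assumes "continuous_on {0..2*pi} w"
  obtains W where "W \<ge> 0" "\<And>t. t \<in> {0..2*pi} \<Longrightarrow> norm (w t) \<le> W"
proof -
  obtain W where W: "\<And>t. t \<in> {0..2*pi} \<Longrightarrow> norm (w t) \<le> W"
    using compact_imp_bounded[OF compact_continuous_image[OF assms compact_Icc]]
    unfolding bounded_iff by (metis image_eqI)
  have "W \<ge> 0" using W[of 0] by (auto intro: order_trans[OF norm_ge_zero])
  then show ?thesis using W that by blast
qed

lemma fcoef_conv:
  assumes c: "continuous_on {0..2*pi} c" "c 0 = c (2*pi)"
    and as: "(\<lambda>k. norm (fcoef c k)) summable_on UNIV" and w: "continuous_on {0..2*pi} w"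
  shows "fcoef (\<lambda>t. c t * w t) \<sigma> = infsum (\<lambda>\<rho>. fcoef c (\<sigma> - \<rho>) * fcoef w \<rho>) UNIV"
proof -
  obtain W where W: "W \<ge> 0" "\<And>t. t \<in> {0..2*pi} \<Longrightarrow> norm (w t) \<le> W"
    using bounded_on_interval[OF w] by blast
  have wb: "norm (fcoef w j) \<le> W" for j by (rule fcoef_bound[OF w W(2)])
  have wb2: "norm (fcoef c k) * norm (fcoef w j) \<le> W * norm (fcoef c k)" for k j
    using mult_left_mono[OF wb[of j] norm_ge_zero[of "fcoef c k"]] by (simp add: mult.commute)
  have b: "bij_betw (\<lambda>k. \<sigma> - k) UNIV UNIV" by (rule bij_betwI[of _ _ _ "\<lambda>k. \<sigma> - k"]) auto
  have re: "infsum (\<lambda>\<rho>. fcoef c (\<sigma> - \<rho>) * fcoef w \<rho>) UNIV = infsum (\<lambda>k. fcoef c k * fcoef w (\<sigma> - k)) UNIV"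
    using infsum_reindex_bij_betw[OF b, of "\<lambda>\<rho>. fcoef c (\<sigma> - \<rho>) * fcoef w \<rho>"] by simp
  define A where "A = infsum (\<lambda>k. fcoef c k * fcoef w (\<sigma> - k)) UNIV"
  define T where "T F = infsum (\<lambda>k. norm (fcoef c k)) (UNIV - F)" for F
  have asW: "(\<lambda>k. W * norm (fcoef c k)) summable_on UNIV"
    using summable_on_cmult_right[OF as] by blast
  have asA: "(\<lambda>k. norm (fcoef c k * fcoef w (\<sigma> - k))) summable_on UNIV"
    by (rule Infinite_Sum.abs_summable_on_comparison_test'[OF asW]) (auto simp: norm_mult wb2)
  have cw: "continuous_on {0..2*pi} (\<lambda>t. c t * w t)" by (intro continuous_intros c w)
  have key: "norm (fcoef (\<lambda>t. c t * w t) \<sigma> - A) \<le> 2 * W * T F" if F: "finite F" for F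
  proof -
    define S where "S t = (\<Sum>k\<in>F. fcoef c k * ee k t)" for t
    have cS: "continuous_on {0..2*pi} S" unfolding S_def by (intro continuous_intros)
    have 1: "norm (A - (\<Sum>k\<in>F. fcoef c k * fcoef w (\<sigma> - k))) \<le> W * T F"
    proof -
      have "norm (A - (\<Sum>k\<in>F. fcoef c k * fcoef w (\<sigma> - k))) \<le>
            infsum (\<lambda>k. norm (fcoef c k * fcoef w (\<sigma> - k))) (UNIV - F)"
        unfolding A_def by (rule tail_bound[OF asA F])
      also have "\<dots> \<le> infsum (\<lambda>k. W * norm (fcoef c k)) (UNIV - F)"
        by (rule infsum_mono[OF summable_on_subset_banach[OF asA] summable_on_subset_banach[OF asW]])
           (auto simp: norm_mult wb2)
      also have "\<dots> = W * T F" unfolding T_def by (simp add: infsum_cmult_right')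
      finally show ?thesis .
    qed
    have 2: "(\<Sum>k\<in>F. fcoef c k * fcoef w (\<sigma> - k)) = fcoef (\<lambda>t. S t * w t) \<sigma>"
    proof -
      have "fcoef (\<lambda>t. S t * w t) \<sigma> = fcoef (\<lambda>t. \<Sum>k\<in>F. fcoef c k * (ee k t * w t)) \<sigma>"
        unfolding S_def by (simp add: sum_distrib_right mult.assoc)
      also have "\<dots> = (\<Sum>k\<in>F. fcoef (\<lambda>t. fcoef c k * (ee k t * w t)) \<sigma>)"
        by (rule fcoef_sum[OF F]) (intro continuous_intros w)
      also have "\<dots> = (\<Sum>k\<in>F. fcoef c k * fcoef w (\<sigma> - k))"
        by (simp add: fcoef_cmult fcoef_ee_mult)
      finally show ?thesis by simp
    qed
    have 3: "norm (fcoef (\<lambda>t. c t * w t) \<sigma> - fcoef (\<lambda>t. S t * w t) \<sigma>) \<le> T F * W"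
    proof -
      have "fcoef (\<lambda>t. c t * w t) \<sigma> - fcoef (\<lambda>t. S t * w t) \<sigma> = fcoef (\<lambda>t. (c t - S t) * w t) \<sigma>"
      proof -
        have "fcoef (\<lambda>t. c t * w t) \<sigma> - fcoef (\<lambda>t. S t * w t) \<sigma> = fcoef (\<lambda>t. c t * w t - S t * w t) \<sigma>"
          by (rule fcoef_diff[symmetric]) (intro continuous_intros c w cS)+
        also have "(\<lambda>t. c t * w t - S t * w t) = (\<lambda>t. (c t - S t) * w t)" by (simp add: left_diff_distrib)
        finally show ?thesis .
      qed
      also have "norm \<dots> \<le> T F * W"
      proof (rule fcoef_bound)
        show "continuous_on {0..2 * pi} (\<lambda>t. (c t - S t) * w t)" by (intro continuous_intros c w cS)
        fix t assume t: "t \<in> {0..2*pi}"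
        have "norm (c t - S t) \<le> T F"
          unfolding S_def T_def by (rule fourier_partial_bound[OF c as t F])
        then show "norm ((c t - S t) * w t) \<le> T F * W"
          unfolding norm_mult by (intro mult_mono W(2) t) (auto simp: T_def intro!: infsum_nonneg)
      qed
      finally show ?thesis .
    qed
    have "norm (fcoef (\<lambda>t. c t * w t) \<sigma> - A) \<le>
        norm (fcoef (\<lambda>t. c t * w t) \<sigma> - fcoef (\<lambda>t. S t * w t) \<sigma>) + norm (A - (\<Sum>k\<in>F. fcoef c k * fcoef w (\<sigma> - k)))"
      using 2 norm_triangle_ineq4[of "fcoef (\<lambda>t. c t * w t) \<sigma> - fcoef (\<lambda>t. S t * w t) \<sigma>" "A - fcoef (\<lambda>t. S t * w t) \<sigma>"]
      by (simp add: algebra_simps)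
    also have "\<dots> \<le> 2 * W * T F" using 1 3 by (simp add: algebra_simps)
    finally show ?thesis .
  qed
  have "fcoef (\<lambda>t. c t * w t) \<sigma> = A"
  proof (rule norm_lt_all_eq)
    fix e :: real assume e: "e > 0"
    obtain F0 where F0: "finite F0" "\<And>F. finite F \<Longrightarrow> F0 \<subseteq> F \<Longrightarrow> T F < e / (2 * W + 1)"
      using tail_small[OF as _ divide_pos_pos[OF e], of "2 * W + 1"] W(1) unfolding T_def by auto
    have "norm (fcoef (\<lambda>t. c t * w t) \<sigma> - A) \<le> 2 * W * T F0" by (rule key[OF F0(1)])
    also have "\<dots> \<le> (2 * W + 1) * T F0"
      using W(1) by (intro mult_right_mono) (auto simp: T_def intro!: infsum_nonneg)
    also have "\<dots> < (2 * W + 1) * (e / (2 * W + 1))"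
      using F0(2)[OF F0(1) order_refl] W(1) by (intro mult_strict_left_mono) auto
    also have "\<dots> = e" using W(1) by simp
    finally show "norm (fcoef (\<lambda>t. c t * w t) \<sigma> - A) < e" .
  qed
  then show ?thesis unfolding re A_def .
qed


lemma shift_vderiv:
  assumes "(g has_vector_derivative g') (at (x + a))"
  shows "((\<lambda>s. g (s + a)) has_vector_derivative g') (at x)"
proof -
  have "((\<lambda>s. s + a) has_vector_derivative 1) (at x)"
    by (auto intro!: derivative_eq_intros)
  from vector_diff_chain_at[OF this] assms show ?thesis by (simp add: o_def)
qed

context
  fixes c :: "real \<Rightarrow> complex"
  assumes sc: "smooth_periodic c"
begin

definition dd :: "nat \<Rightarrow> real \<Rightarrow> complex" where "dd k = (vderiv ^^ k) c"

lemma dd_0: "dd 0 = c" by (simp add: dd_def)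

lemma dd_deriv: "(dd k has_vector_derivative dd (Suc k) t) (at t)"
proof -
  have "dd k differentiable (at t)" using sc unfolding smooth_periodic_def dd_def by blast
  then show ?thesis unfolding dd_def by (simp add: vector_derivative_works vderiv_def)
qed

lemma dd_cont: "continuous_on S (dd k)"
  by (meson continuous_at_imp_continuous_on dd_deriv has_vector_derivative_continuous)

lemma dd_per: "dd k (t + 2*pi) = dd k t"
proof (induction k arbitrary: t)
  case 0
  then show ?case using sc by (simp add: dd_def smooth_periodic_def)
next
  case (Suc k)
  have eq: "(\<lambda>s. dd k (s + 2*pi)) = dd k" using Suc by auto
  have "((\<lambda>s. dd k (s + 2*pi)) has_vector_derivative dd (Suc k) (t + 2*pi)) (at t)"
    by (rule shift_vderiv[OF dd_deriv])
  then have "(dd k has_vector_derivative dd (Suc k) (t + 2*pi)) (at t)" by (simp only: eq)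
  from vector_derivative_unique_at[OF this dd_deriv] show ?case .
qed

lemma dd_per0: "dd k 0 = dd k (2*pi)" using dd_per[of k 0] by simp

lemma fcoef_dd: "fcoef (dd k) \<sigma> = (\<i> * of_int \<sigma>) ^ k * fcoef c \<sigma>"
proof (induction k)
  case 0
  then show ?case by (simp add: dd_0)
next
  case (Suc k)
  have "fcoef (dd (Suc k)) \<sigma> = \<i> * of_int \<sigma> * fcoef (dd k) \<sigma>"
    by (rule fcoef_ibp[OF has_vector_derivative_at_within[OF dd_deriv] dd_cont dd_per0])
  then show ?case using Suc by simp
qed

lemma c_cont: "continuous_on S c" using dd_cont[of S 0] by (simp add: dd_0)
lemma c_per0: "c 0 = c (2*pi)" using dd_per0[of 0] by (simp add: dd_0)

lemma fcoef_decay: "\<exists>B\<ge>0. \<forall>\<sigma>. norm (fcoef c \<sigma>) * (1 + real_of_int \<bar>\<sigma>\<bar>) ^ N \<le> B"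
proof -
  obtain M0 where M0: "M0 \<ge> 0" "\<And>t. t \<in> {0..2*pi} \<Longrightarrow> norm (dd 0 t) \<le> M0"
    using bounded_on_interval[OF dd_cont] by blast
  obtain MN where MN: "MN \<ge> 0" "\<And>t. t \<in> {0..2*pi} \<Longrightarrow> norm (dd N t) \<le> MN"
    using bounded_on_interval[OF dd_cont] by blast
  have b0: "norm (fcoef c \<sigma>) \<le> M0" for \<sigma>
    using fcoef_bound[OF dd_cont M0(2), of \<sigma>] by (simp add: dd_0)
  have bN: "\<bar>real_of_int \<sigma>\<bar> ^ N * norm (fcoef c \<sigma>) \<le> MN" for \<sigma>
    using fcoef_bound[OF dd_cont MN(2), of \<sigma>] by (simp add: fcoef_dd norm_mult norm_power)
  have "norm (fcoef c \<sigma>) * (1 + real_of_int \<bar>\<sigma>\<bar>) ^ N \<le> 2 ^ N * MN + M0" for \<sigma>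
  proof (cases "\<sigma> = 0")
    case True
    then show ?thesis using b0[of \<sigma>] MN by (simp add: add_increasing)
  next
    case False
    then have ge1: "real_of_int \<bar>\<sigma>\<bar> \<ge> 1" by linarith
    have "(1 + real_of_int \<bar>\<sigma>\<bar>) ^ N \<le> (2 * \<bar>real_of_int \<sigma>\<bar>) ^ N"
      by (rule power_mono) (use ge1 in auto)
    then have "norm (fcoef c \<sigma>) * (1 + real_of_int \<bar>\<sigma>\<bar>) ^ N \<le> norm (fcoef c \<sigma>) * (2 * \<bar>real_of_int \<sigma>\<bar>) ^ N"
      by (rule mult_left_mono) simp
    also have "\<dots> = 2 ^ N * (\<bar>real_of_int \<sigma>\<bar> ^ N * norm (fcoef c \<sigma>))"
      by (simp add: power_mult_distrib)
    also have "\<dots> \<le> 2 ^ N * MN" by (rule mult_left_mono[OF bN]) simp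
    finally show ?thesis using M0 by simp
  qed
  moreover have "2 ^ N * MN + M0 \<ge> 0" using MN M0 by simp
  ultimately show ?thesis by blast
qed

lemma fcoef_decay': "\<exists>B\<ge>0. \<forall>\<sigma>. norm (fcoef c \<sigma>) \<le> B / (1 + real_of_int \<bar>\<sigma>\<bar>) ^ N"
proof -
  obtain B where B: "B \<ge> 0" "\<And>\<sigma>. norm (fcoef c \<sigma>) * (1 + real_of_int \<bar>\<sigma>\<bar>) ^ N \<le> B"
    using fcoef_decay by blast
  have "norm (fcoef c \<sigma>) \<le> B / (1 + real_of_int \<bar>\<sigma>\<bar>) ^ N" for \<sigma>
    using B(2)[of \<sigma>] by (simp add: field_simps add_pos_nonneg)
  then show ?thesis using B(1) by blast
qed

lemma fcoef_abs_summable: "(\<lambda>k. norm (fcoef c k)) summable_on UNIV"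
proof -
  obtain B where B: "B \<ge> 0" "\<And>\<sigma>. norm (fcoef c \<sigma>) \<le> B / (1 + real_of_int \<bar>\<sigma>\<bar>) ^ 2"
    using fcoef_decay'[of 2] by blast
  have "(\<lambda>k. B * wZ (0 - k)) summable_on UNIV"
    using summable_on_cmult_right[OF wZ_shift_summable(1)] by blast
  then show ?thesis
    by (rule Infinite_Sum.abs_summable_on_comparison_test') (use B in \<open>auto simp: wZ_def\<close>)
qed

lemma fcoef_conv_c:
  assumes "continuous_on {0..2*pi} w"
  shows "fcoef (\<lambda>t. c t * w t) \<sigma> = infsum (\<lambda>\<rho>. fcoef c (\<sigma> - \<rho>) * fcoef w \<rho>) UNIV"
  by (rule fcoef_conv[OF c_cont c_per0 fcoef_abs_summable assms])

end


lemma inorm_nonneg: "inorm \<xi> \<ge> 0" unfolding inorm_def by (simp add: sum_nonneg)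
lemma fnorm_nonneg: "fnorm \<eta> \<ge> 0" unfolding fnorm_def by simp

lemma inorm_ge1: assumes "\<xi> \<noteq> 0" shows "inorm \<xi> \<ge> 1"
proof -
  obtain i where i: "\<xi> $ i \<noteq> 0" using assms by (auto simp: vec_eq_iff)
  then have "(1::int) \<le> \<bar>\<xi> $ i\<bar>" by linarith
  then have a: "1 \<le> \<bar>real_of_int (\<xi> $ i)\<bar>" by (metis of_int_1_le_iff of_int_abs)
  then have "1 * 1 \<le> \<bar>real_of_int (\<xi> $ i)\<bar> * \<bar>real_of_int (\<xi> $ i)\<bar>" by (intro mult_mono) auto
  then have "1 \<le> (real_of_int (\<xi> $ i))\<^sup>2" by (simp add: power2_eq_square)
  also have "\<dots> \<le> (\<Sum>i\<in>UNIV. (real_of_int (\<xi> $ i))\<^sup>2)"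
    by (rule member_le_sum) auto
  finally show ?thesis unfolding inorm_def by simp
qed

lemma abs_le_fnorm: "real_of_int \<bar>\<tau>\<bar> \<le> fnorm (\<tau>, \<xi>)"
  unfolding fnorm_def by (simp add: real_le_rsqrt)

lemma inorm_le_fnorm: "inorm \<xi> \<le> fnorm (\<tau>, \<xi>)"
  unfolding fnorm_def using inorm_nonneg[of \<xi>] by (simp add: real_le_rsqrt)

lemma fnorm_le_sum: "fnorm (\<tau>, \<xi>) \<le> real_of_int \<bar>\<tau>\<bar> + inorm \<xi>"
proof -
  have "sqrt ((real_of_int \<tau>)\<^sup>2 + (inorm \<xi>)\<^sup>2) \<le> sqrt ((real_of_int \<bar>\<tau>\<bar> + inorm \<xi>)\<^sup>2)"
    using inorm_nonneg[of \<xi>] by (intro real_sqrt_le_mono) (simp add: power2_eq_square algebra_simps)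
  then show ?thesis unfolding fnorm_def using inorm_nonneg[of \<xi>] by simp
qed

lemma fnorm_shift: "fnorm (\<tau>, \<xi>) \<le> real_of_int \<bar>\<tau> - \<sigma>\<bar> + fnorm (\<sigma>, \<xi>)"
proof -
  define a where "a = inorm \<xi>"
  define x where "x = real_of_int (\<tau> - \<sigma>)"
  define y where "y = real_of_int \<sigma>"
  have "sqrt ((x + y)\<^sup>2 + a\<^sup>2) \<le> \<bar>x\<bar> + sqrt (y\<^sup>2 + a\<^sup>2)"
  proof -
    have s: "sqrt (y\<^sup>2 + a\<^sup>2) \<ge> \<bar>y\<bar>" by (simp add: real_le_rsqrt)
    have "(x + y)\<^sup>2 + a\<^sup>2 \<le> (\<bar>x\<bar> + sqrt (y\<^sup>2 + a\<^sup>2))\<^sup>2"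
    proof -
      have "(\<bar>x\<bar> + sqrt (y\<^sup>2 + a\<^sup>2))\<^sup>2 = x\<^sup>2 + 2 * \<bar>x\<bar> * sqrt (y\<^sup>2 + a\<^sup>2) + (y\<^sup>2 + a\<^sup>2)"
        by (simp add: power2_eq_square algebra_simps)
      moreover have "2 * x * y \<le> 2 * \<bar>x\<bar> * sqrt (y\<^sup>2 + a\<^sup>2)"
      proof -
        have "x * y \<le> \<bar>x\<bar> * \<bar>y\<bar>" by (simp add: abs_mult[symmetric])
        also have "\<dots> \<le> \<bar>x\<bar> * sqrt (y\<^sup>2 + a\<^sup>2)" by (rule mult_left_mono[OF s]) simp
        finally show ?thesis by simp
      qed
      ultimately show ?thesis by (simp add: power2_eq_square algebra_simps)
    qed
    then show ?thesis by (intro real_le_lsqrt) auto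
  qed
  then show ?thesis unfolding fnorm_def a_def x_def y_def by simp
qed

lemma peetre1: "1 + fnorm (\<tau>, \<xi>) \<le> (1 + real_of_int \<bar>\<tau> - \<sigma>\<bar>) * (1 + fnorm (\<sigma>, \<xi>))"
proof -
  define a where "a = real_of_int \<bar>\<tau> - \<sigma>\<bar>"
  define b where "b = fnorm (\<sigma>, \<xi>)"
  have ab: "a \<ge> 0" "b \<ge> 0" using fnorm_nonneg[of "(\<sigma>, \<xi>)"] by (auto simp: a_def b_def)
  have "fnorm (\<tau>, \<xi>) \<le> a + b" using fnorm_shift[of \<tau> \<xi> \<sigma>] by (simp add: a_def b_def)
  moreover have "(1 + a) * (1 + b) = 1 + a + b + a * b" by (simp add: algebra_simps)
  moreover have "a * b \<ge> 0" using ab by simp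
  ultimately show ?thesis unfolding a_def[symmetric] b_def[symmetric] by linarith
qed

lemma peetre:
  "(1 + fnorm (\<sigma>, \<xi>)) powr r \<le> (1 + real_of_int \<bar>\<tau> - \<sigma>\<bar>) powr \<bar>r\<bar> * (1 + fnorm (\<tau>, \<xi>)) powr r"
proof (cases "r \<ge> 0")
  case True
  have "1 + fnorm (\<sigma>, \<xi>) \<le> (1 + real_of_int \<bar>\<tau> - \<sigma>\<bar>) * (1 + fnorm (\<tau>, \<xi>))"
    using peetre1[of \<sigma> \<xi> \<tau>] by (simp add: abs_minus_commute)
  then have "(1 + fnorm (\<sigma>, \<xi>)) powr r \<le> ((1 + real_of_int \<bar>\<tau> - \<sigma>\<bar>) * (1 + fnorm (\<tau>, \<xi>))) powr r"
    using True by (intro powr_mono2) (auto simp: add_nonneg_nonneg fnorm_nonneg)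
  also have "\<dots> = (1 + real_of_int \<bar>\<tau> - \<sigma>\<bar>) powr \<bar>r\<bar> * (1 + fnorm (\<tau>, \<xi>)) powr r"
    using True by (simp add: powr_mult add_nonneg_nonneg fnorm_nonneg)
  finally show ?thesis .
next
  case False
  define s where "s = - r"
  have s: "s > 0" "r = - s" "\<bar>r\<bar> = s" using False by (auto simp: s_def)
  have pos1: "1 + fnorm (\<sigma>, \<xi>) > 0" "1 + fnorm (\<tau>, \<xi>) > 0" "1 + real_of_int \<bar>\<tau> - \<sigma>\<bar> > 0"
    using fnorm_nonneg[of "(\<sigma>, \<xi>)"] fnorm_nonneg[of "(\<tau>, \<xi>)"] by (auto simp: add_pos_nonneg)
  have "(1 + fnorm (\<tau>, \<xi>)) powr s \<le> ((1 + real_of_int \<bar>\<tau> - \<sigma>\<bar>) * (1 + fnorm (\<sigma>, \<xi>))) powr s"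
    using s pos1 by (intro powr_mono2 peetre1) auto
  also have "\<dots> = (1 + real_of_int \<bar>\<tau> - \<sigma>\<bar>) powr s * (1 + fnorm (\<sigma>, \<xi>)) powr s"
    using pos1 by (simp add: powr_mult)
  finally have *: "(1 + fnorm (\<tau>, \<xi>)) powr s \<le> (1 + real_of_int \<bar>\<tau> - \<sigma>\<bar>) powr s * (1 + fnorm (\<sigma>, \<xi>)) powr s" .
  show ?thesis unfolding s(2,3) using * pos1 s(1)
    by (simp add: powr_minus field_simps)
qed

definition bnd :: "('n::finite) coef \<Rightarrow> real \<Rightarrow> bool" where
  "bnd u r \<longleftrightarrow> (\<exists>A. \<forall>\<eta>. norm (u \<eta>) \<le> A * (1 + fnorm \<eta>) powr r)"

lemma bndE:
  assumes "bnd u r"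
  obtains A where "A \<ge> 0" "\<And>\<eta>. norm (u \<eta>) \<le> A * (1 + fnorm \<eta>) powr r"
proof -
  obtain A where A: "\<And>\<eta>. norm (u \<eta>) \<le> A * (1 + fnorm \<eta>) powr r" using assms bnd_def by blast
  have "norm (u \<eta>) \<le> max A 0 * (1 + fnorm \<eta>) powr r" for \<eta>
    using A[of \<eta>] by (smt (verit) mult_right_mono powr_ge_zero)
  then show ?thesis using that[of "max A 0"] by auto
qed

lemma bnd_mono: assumes "bnd u r" "r \<le> s" shows "bnd u s"
proof -
  obtain A where A: "A \<ge> 0" "\<And>\<eta>. norm (u \<eta>) \<le> A * (1 + fnorm \<eta>) powr r" using bndE[OF assms(1)] by blast
  have "norm (u \<eta>) \<le> A * (1 + fnorm \<eta>) powr s" for \<eta>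
  proof -
    have "(1 + fnorm \<eta>) powr r \<le> (1 + fnorm \<eta>) powr s"
      using assms(2) fnorm_nonneg[of \<eta>] by (intro powr_mono) auto
    then show ?thesis using A(2)[of \<eta>] A(1) by (meson mult_left_mono order_trans)
  qed
  then show ?thesis unfolding bnd_def by blast
qed

lemma bnd_add: assumes "bnd u r" "bnd v r" shows "bnd (\<lambda>\<eta>. u \<eta> + v \<eta>) r"
proof -
  obtain A where A: "\<And>\<eta>. norm (u \<eta>) \<le> A * (1 + fnorm \<eta>) powr r" using bndE[OF assms(1)] by blast
  obtain B where B: "\<And>\<eta>. norm (v \<eta>) \<le> B * (1 + fnorm \<eta>) powr r" using bndE[OF assms(2)] by blast
  have "norm (u \<eta> + v \<eta>) \<le> (A + B) * (1 + fnorm \<eta>) powr r" for \<eta>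
    using norm_triangle_ineq[of "u \<eta>" "v \<eta>"] A[of \<eta>] B[of \<eta>] by (simp add: distrib_right)
  then show ?thesis unfolding bnd_def by blast
qed

lemma bnd_cmult: assumes "bnd u r" shows "bnd (\<lambda>\<eta>. a * u \<eta>) r"
proof -
  obtain A where A: "\<And>\<eta>. norm (u \<eta>) \<le> A * (1 + fnorm \<eta>) powr r" using bndE[OF assms(1)] by blast
  have "norm (a * u \<eta>) \<le> (norm a * A) * (1 + fnorm \<eta>) powr r" for \<eta>
    using mult_left_mono[OF A[of \<eta>], of "norm a"] by (simp add: norm_mult mult.assoc)
  then show ?thesis unfolding bnd_def by blast
qed

lemma distribution_bnd: "is_distribution u \<longleftrightarrow> (\<exists>r. bnd u r)"
proof
  assume "is_distribution u"
  then obtain C and k :: nat where "\<forall>\<eta>. cmod (u \<eta>) \<le> C * (1 + fnorm \<eta>) ^ k"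
    unfolding is_distribution_def by blast
  moreover have eq: "(1 + fnorm \<eta>) ^ k = (1 + fnorm \<eta>) powr real k" for \<eta>
    using fnorm_nonneg[of \<eta>] by (simp add: powr_realpow add_pos_nonneg)
  ultimately have "\<forall>\<eta>. cmod (u \<eta>) \<le> C * (1 + fnorm \<eta>) powr (real k)" by metis
  then show "\<exists>r. bnd u r" unfolding bnd_def by blast
next
  assume "\<exists>r. bnd u r"
  then obtain r where "bnd u r" by blast
  then have "bnd u (real (nat \<lceil>r\<rceil>))" by (rule bnd_mono) linarith
  then obtain A where A: "\<And>\<eta>. norm (u \<eta>) \<le> A * (1 + fnorm \<eta>) powr (real (nat \<lceil>r\<rceil>))"
    using bndE by blast
  moreover have "(1 + fnorm \<eta>) ^ k = (1 + fnorm \<eta>) powr real k" for \<eta> k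
    using fnorm_nonneg[of \<eta>] by (simp add: powr_realpow add_pos_nonneg)
  ultimately have "\<forall>\<eta>. cmod (u \<eta>) \<le> A * (1 + fnorm \<eta>) ^ (nat \<lceil>r\<rceil>)" by metis
  then show "is_distribution u" unfolding is_distribution_def by blast
qed

lemma smooth_bnd: "is_smooth u \<longleftrightarrow> (\<forall>r. bnd u r)"
proof
  assume s: "is_smooth u"
  show "\<forall>r. bnd u r"
  proof
    fix r :: real
    obtain C where "\<forall>\<eta>. cmod (u \<eta>) \<le> C * (1 + fnorm \<eta>) powr (- real (nat \<lceil>-r\<rceil>))"
      using s unfolding is_smooth_def by blast
    then have "bnd u (- real (nat \<lceil>-r\<rceil>))" unfolding bnd_def by blast
    then show "bnd u r" by (rule bnd_mono) linarith
  qed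
next
  assume "\<forall>r. bnd u r"
  then show "is_smooth u" unfolding is_smooth_def bnd_def by blast
qed

definition tame :: "(('n::finite) coef \<Rightarrow> 'n coef) \<Rightarrow> bool" where
  "tame T \<longleftrightarrow> (\<exists>d. \<forall>u r. bnd u r \<longrightarrow> bnd (T u) (r + d))"

lemma tame_distribution: "tame T \<Longrightarrow> is_distribution u \<Longrightarrow> is_distribution (T u)"
  unfolding tame_def distribution_bnd by blast

lemma tame_smooth: assumes "tame T" "is_smooth u" shows "is_smooth (T u)"
proof -
  obtain d where d: "\<And>u r. bnd u r \<Longrightarrow> bnd (T u) (r + d)" using assms(1) tame_def by blast
  have "bnd (T u) r" for r using d[of u "r - d"] assms(2) unfolding smooth_bnd by simp
  then show ?thesis unfolding smooth_bnd by blast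
qed

lemma tame_comp: assumes "tame S" "tame T" shows "tame (S \<circ> T)"
proof -
  obtain d where d: "\<And>u r. bnd u r \<Longrightarrow> bnd (S u) (r + d)" using assms(1) tame_def by blast
  obtain e where e: "\<And>u r. bnd u r \<Longrightarrow> bnd (T u) (r + e)" using assms(2) tame_def by blast
  have "bnd ((S \<circ> T) u) (r + (e + d))" if "bnd u r" for u r
    using d[OF e[OF that]] by (simp add: add.assoc)
  then show ?thesis unfolding tame_def by blast
qed

lemma tame_id: "tame id" unfolding tame_def by (rule exI[of _ 0]) simp

lemma tame_comp_list: "(\<And>f. f \<in> set fs \<Longrightarrow> tame f) \<Longrightarrow> tame (comp_list fs)"
  unfolding comp_list_def by (induction fs) (auto intro: tame_comp tame_id)

lemma tame_add: assumes "tame S" "tame T" shows "tame (\<lambda>u \<eta>. S u \<eta> + T u \<eta>)"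
proof -
  obtain d where d: "\<And>u r. bnd u r \<Longrightarrow> bnd (S u) (r + d)" using assms(1) tame_def by blast
  obtain e where e: "\<And>u r. bnd u r \<Longrightarrow> bnd (T u) (r + e)" using assms(2) tame_def by blast
  have "bnd (\<lambda>\<eta>. S u \<eta> + T u \<eta>) (r + max d e)" if "bnd u r" for u r
    by (rule bnd_add; rule bnd_mono[OF d[OF that]] bnd_mono[OF e[OF that]]; simp)
  then show ?thesis unfolding tame_def by blast
qed

lemma tame_cmult: assumes "tame T" shows "tame (\<lambda>u \<eta>. a * T u \<eta>)"
  using assms bnd_cmult unfolding tame_def by blast

lemma tame_Dt: "tame (Dt :: ('n::finite) coef \<Rightarrow> 'n coef)"
proof -
  have "bnd (Dt u) (r + 1)" if ur: "bnd u r" for u :: "('n::finite) coef" and r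
  proof -
    obtain A where A: "A \<ge> 0" "\<And>\<eta>. norm (u \<eta>) \<le> A * (1 + fnorm \<eta>) powr r" using bndE[OF ur] by blast
    have "norm (Dt u \<eta>) \<le> A * (1 + fnorm \<eta>) powr (r + 1)" for \<eta>
    proof (cases \<eta>)
      case (Pair \<tau> \<xi>)
      have p: "1 + fnorm \<eta> > 0" using fnorm_nonneg[of \<eta>] by simp
      have "norm (Dt u \<eta>) = real_of_int \<bar>\<tau>\<bar> * norm (u \<eta>)" by (simp add: Dt_def Pair norm_mult)
      also have "\<dots> \<le> (1 + fnorm \<eta>) * (A * (1 + fnorm \<eta>) powr r)"
        using abs_le_fnorm[of \<tau> \<xi>] A(2)[of \<eta>] Pair
        by (intro mult_mono) (auto simp: A(1))
      also have "\<dots> = A * (1 + fnorm \<eta>) powr (r + 1)" using p by (simp add: powr_add)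
      finally show ?thesis .
    qed
    then show ?thesis unfolding bnd_def by blast
  qed
  then show ?thesis unfolding tame_def by blast
qed

definition pgrowth :: "(int ^ ('n::finite) \<Rightarrow> complex) \<Rightarrow> bool" where
  "pgrowth p \<longleftrightarrow> (\<exists>C>0. \<exists>\<nu>::real. \<forall>\<xi>. \<xi> \<noteq> 0 \<longrightarrow> cmod (p \<xi>) \<le> C * inorm \<xi> powr \<nu>)"

lemma pgrowth_bound:
  assumes "pgrowth p"
  obtains C d where "C \<ge> 0" "d \<ge> 0" "\<And>\<xi>. norm (p \<xi>) \<le> C * (1 + inorm \<xi>) powr d"
proof -
  obtain C \<nu> where C: "C > 0" "\<And>\<xi>. \<xi> \<noteq> 0 \<Longrightarrow> cmod (p \<xi>) \<le> C * inorm \<xi> powr \<nu>"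
    using assms unfolding pgrowth_def by blast
  have "norm (p \<xi>) \<le> (C + norm (p 0)) * (1 + inorm \<xi>) powr \<bar>\<nu>\<bar>" for \<xi>
  proof (cases "\<xi> = 0")
    case True
    have "1 \<le> (1 + inorm \<xi>) powr \<bar>\<nu>\<bar>" using inorm_nonneg[of \<xi>] by (intro ge_one_powr_ge_zero) auto
    then have "norm (p 0) \<le> norm (p 0) * (1 + inorm \<xi>) powr \<bar>\<nu>\<bar>" by (simp add: mult_le_cancel_left1)
    also have "\<dots> \<le> (C + norm (p 0)) * (1 + inorm \<xi>) powr \<bar>\<nu>\<bar>" using C(1) by (intro mult_right_mono) auto
    finally show ?thesis using True by simp
  next
    case False
    have ge1: "inorm \<xi> \<ge> 1" by (rule inorm_ge1[OF False])
    have "inorm \<xi> powr \<nu> \<le> inorm \<xi> powr \<bar>\<nu>\<bar>" using ge1 by (intro powr_mono) auto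
    also have "\<dots> \<le> (1 + inorm \<xi>) powr \<bar>\<nu>\<bar>" using ge1 by (intro powr_mono2) auto
    finally have "norm (p \<xi>) \<le> C * (1 + inorm \<xi>) powr \<bar>\<nu>\<bar>"
      using C(2)[OF False] C(1) by (meson mult_left_mono less_imp_le order_trans)
    also have "\<dots> \<le> (C + norm (p 0)) * (1 + inorm \<xi>) powr \<bar>\<nu>\<bar>" by (intro mult_right_mono) auto
    finally show ?thesis .
  qed
  then show ?thesis using that[of "C + norm (p 0)" "\<bar>\<nu>\<bar>"] C(1) by auto
qed

lemma tame_PDx: fixes p :: "int ^ ('n::finite) \<Rightarrow> complex" assumes "pgrowth p" shows "tame (PDx p)"
proof -
  obtain C d where Cd: "C \<ge> 0" "d \<ge> 0" "\<And>\<xi>. norm (p \<xi>) \<le> C * (1 + inorm \<xi>) powr d"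
    using pgrowth_bound[OF assms] by blast
  have "bnd (PDx p u) (r + d)" if ur: "bnd u r" for u :: "('n::finite) coef" and r
  proof -
    obtain A where A: "A \<ge> 0" "\<And>\<eta>. norm (u \<eta>) \<le> A * (1 + fnorm \<eta>) powr r" using bndE[OF ur] by blast
    have "norm (PDx p u \<eta>) \<le> (C * A) * (1 + fnorm \<eta>) powr (r + d)" for \<eta>
    proof (cases \<eta>)
      case (Pair \<tau> \<xi>)
      have p: "1 + fnorm \<eta> > 0" using fnorm_nonneg[of \<eta>] by simp
      have "norm (p \<xi>) \<le> C * (1 + fnorm \<eta>) powr d"
        using Cd(3)[of \<xi>] inorm_le_fnorm[of \<xi> \<tau>] Cd(1,2) inorm_nonneg[of \<xi>] Pair
        by (meson add_left_mono less_eq_real_def mult_left_mono order_trans powr_mono2 add_nonneg_nonneg zero_le_one)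
      then have "norm (PDx p u \<eta>) \<le> (C * (1 + fnorm \<eta>) powr d) * (A * (1 + fnorm \<eta>) powr r)"
        unfolding PDx_def Pair using A(2)[of "(\<tau>, \<xi>)"] Pair
        by (simp add: norm_mult) (intro mult_mono, auto simp: Cd(1))
      also have "\<dots> = (C * A) * (1 + fnorm \<eta>) powr (r + d)" using p by (simp add: powr_add mult_ac)
      finally show ?thesis .
    qed
    then show ?thesis unfolding bnd_def by blast
  qed
  then show ?thesis unfolding tame_def by blast
qed


lemma powr_ratio_le:
  fixes x :: real
  assumes x: "x \<ge> 0" and N: "real N \<ge> \<bar>r\<bar> + 2"
  shows "(1 + x) powr \<bar>r\<bar> / (1 + x) ^ N \<le> 1 / (1 + x)\<^sup>2"
proof -
  have p: "1 + x > 0" using x by simp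
  have "(1 + x) powr \<bar>r\<bar> * (1 + x)\<^sup>2 = (1 + x) powr (\<bar>r\<bar> + 2)"
    using p by (simp add: powr_add powr_realpow)
  also have "\<dots> \<le> (1 + x) powr (real N)" using x N by (intro powr_mono) auto
  also have "\<dots> = (1 + x) ^ N" using p by (simp add: powr_realpow)
  finally show ?thesis using p by (simp add: field_simps)
qed

lemma tame_mult_t:
  assumes sc: "smooth_periodic c"
  shows "tame (mult_t c :: ('n::finite) coef \<Rightarrow> 'n coef)"
proof -
  have "bnd (mult_t c u) (r + 0)" if ur: "bnd u r" for u :: "'n coef" and r
  proof -
    obtain A where A: "A \<ge> 0" "\<And>\<eta>. norm (u \<eta>) \<le> A * (1 + fnorm \<eta>) powr r" using bndE[OF ur] by blast
    define N where "N = nat \<lceil>\<bar>r\<bar>\<rceil> + 2"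
    have N: "real N \<ge> \<bar>r\<bar> + 2" unfolding N_def by linarith
    obtain B where B: "B \<ge> 0" "\<And>\<sigma>. norm (fcoef c \<sigma>) \<le> B / (1 + real_of_int \<bar>\<sigma>\<bar>) ^ N"
      using fcoef_decay'[OF sc, of N] by blast
    have "norm (mult_t c u (\<tau>, \<xi>)) \<le> (A * B * ZZ) * (1 + fnorm (\<tau>, \<xi>)) powr r" for \<tau> \<xi>
    proof -
      define P where "P = (1 + fnorm (\<tau>, \<xi>)) powr r"
      have P: "P \<ge> 0" unfolding P_def by simp
      have trm: "norm (fcoef c (\<tau> - \<sigma>) * u (\<sigma>, \<xi>)) \<le> (A * B * P) * wZ (\<tau> - \<sigma>)" for \<sigma>
      proof -
        define x where "x = real_of_int \<bar>\<tau> - \<sigma>\<bar>"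
        have x: "x \<ge> 0" unfolding x_def by simp
        have xp: "(1 + x) ^ N > 0" using x by simp
        have "norm (u (\<sigma>, \<xi>)) \<le> A * ((1 + x) powr \<bar>r\<bar> * P)"
          using A(2)[of "(\<sigma>, \<xi>)"] peetre[of \<sigma> \<xi> r \<tau>] A(1)
          unfolding x_def P_def by (meson mult_left_mono order_trans)
        moreover have "norm (fcoef c (\<tau> - \<sigma>)) \<le> B / (1 + x) ^ N" using B(2)[of "\<tau> - \<sigma>"] by (simp add: x_def)
        ultimately have "norm (fcoef c (\<tau> - \<sigma>) * u (\<sigma>, \<xi>)) \<le> B / (1 + x) ^ N * (A * ((1 + x) powr \<bar>r\<bar> * P))"
          unfolding norm_mult by (intro mult_mono) (use B A P xp in auto)
        also have "\<dots> = (A * B * P) * ((1 + x) powr \<bar>r\<bar> / (1 + x) ^ N)" by (simp add: field_simps)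
        also have "\<dots> \<le> (A * B * P) * (1 / (1 + x)\<^sup>2)"
          by (intro mult_left_mono powr_ratio_le x N) (use A B P in auto)
        also have "\<dots> = (A * B * P) * wZ (\<tau> - \<sigma>)" by (simp add: wZ_def x_def)
        finally show ?thesis .
      qed
      have "norm (infsum (\<lambda>\<sigma>. fcoef c (\<tau> - \<sigma>) * u (\<sigma>, \<xi>)) UNIV) \<le> (A * B * P) * ZZ"
        by (rule dom_summable(2)[OF trm])
      then show ?thesis by (simp add: mult_t_def P_def mult_ac)
    qed
    then show ?thesis unfolding bnd_def by (metis add_0_right surj_pair)
  qed
  then show ?thesis unfolding tame_def by blast
qed

lemma tame_Lop:
  fixes p :: "int ^ ('n::finite) \<Rightarrow> complex"
  assumes "smooth_periodic c" "pgrowth p"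
  shows "tame (Lop c p)"
proof -
  have "tame (\<lambda>u \<eta>. Dt u \<eta> + (mult_t c \<circ> PDx p) u \<eta>)"
    by (intro tame_add tame_Dt tame_comp tame_mult_t tame_PDx assms)
  then show ?thesis by (simp add: Lop_def[abs_def] o_def)
qed

lemma tame_L0op:
  fixes p :: "int ^ ('n::finite) \<Rightarrow> complex"
  assumes "pgrowth p"
  shows "tame (L0op c p)"
proof -
  have "tame (\<lambda>u \<eta>. Dt u \<eta> + mean c * PDx p u \<eta>)"
    by (intro tame_add tame_Dt tame_cmult tame_PDx assms)
  then show ?thesis by (simp add: L0op_def[abs_def])
qed


lemma mean_fcoef0: "mean c = fcoef c 0"
  unfolding mean_def fcoef_def by simp

context
  fixes c :: "real \<Rightarrow> complex"
  assumes sc: "smooth_periodic c"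
begin

definition CC :: "real \<Rightarrow> complex" where
  "CC t = integral {0..t} (\<lambda>s. c s - mean c)"

lemma cc_cont: "continuous_on S c" by (rule c_cont[OF sc])

lemma CC_deriv: "t \<in> {0..2*pi} \<Longrightarrow> (CC has_vector_derivative (c t - mean c)) (at t within {0..2*pi})"
  unfolding CC_def by (rule integral_has_vector_derivative) (rule continuous_on_diff[OF cc_cont continuous_on_const])

lemma CC_cont: "continuous_on {0..2*pi} CC"
  by (rule continuous_on_vector_derivative[OF CC_deriv])

lemma CC_0: "CC 0 = 0" by (simp add: CC_def)

lemma CC_2pi: "CC (2*pi) = 0"
proof -
  have ic: "c integrable_on {0..2*pi}" by (rule integrable_continuous_real[OF cc_cont])
  have "CC (2*pi) = integral {0..2*pi} c - integral {0..2*pi} (\<lambda>s. mean c)"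
    unfolding CC_def by (rule integral_diff[OF ic integrable_const_ivl])
  also have "\<dots> = 0" by (simp add: mean_def scaleR_conv_of_real)
  finally show ?thesis .
qed

definition tmax :: "complex \<Rightarrow> real" where
  "tmax q = (SOME t. t \<in> {0..2*pi} \<and> (\<forall>s\<in>{0..2*pi}. Re (- \<i> * q * CC s) \<le> Re (- \<i> * q * CC t)))"

lemma tmax: "tmax q \<in> {0..2*pi}" "\<And>s. s \<in> {0..2*pi} \<Longrightarrow> Re (- \<i> * q * CC s) \<le> Re (- \<i> * q * CC (tmax q))"
proof -
  have "\<exists>t\<in>{0..2*pi}. \<forall>s\<in>{0..2*pi}. Re (- \<i> * q * CC s) \<le> Re (- \<i> * q * CC t)"
    by (rule continuous_attains_sup) (auto intro!: continuous_intros CC_cont)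
  then have "\<exists>t. t \<in> {0..2*pi} \<and> (\<forall>s\<in>{0..2*pi}. Re (- \<i> * q * CC s) \<le> Re (- \<i> * q * CC t))" by blast
  from someI_ex[OF this] show "tmax q \<in> {0..2*pi}" "\<And>s. s \<in> {0..2*pi} \<Longrightarrow> Re (- \<i> * q * CC s) \<le> Re (- \<i> * q * CC (tmax q))"
    unfolding tmax_def by blast+
qed

definition Wf :: "complex \<Rightarrow> int \<Rightarrow> real \<Rightarrow> complex" where
  "Wf q \<tau>0 t = ee \<tau>0 t * exp (- \<i> * q * CC t - of_real (Re (- \<i> * q * CC (tmax q))))"

lemma Wf_norm: "t \<in> {0..2*pi} \<Longrightarrow> norm (Wf q \<tau>0 t) \<le> 1"
  unfolding Wf_def norm_mult ee_norm norm_exp_eq_Re using tmax(2)[of t q] by simp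

lemma Wf_norm_max: "norm (Wf q \<tau>0 (tmax q)) = 1"
  unfolding Wf_def norm_mult ee_norm norm_exp_eq_Re by simp

lemma Wf_deriv:
  assumes t: "t \<in> {0..2*pi}"
  shows "(Wf q \<tau>0 has_vector_derivative ((\<i> * of_int \<tau>0 - \<i> * q * (c t - mean c)) * Wf q \<tau>0 t)) (at t within {0..2*pi})"
proof -
  define a :: complex where "a = of_real (Re (- \<i> * q * CC (tmax q)))"
  define E where "E t = exp (- \<i> * q * CC t - a)" for t
  define D where "D = - \<i> * q * (c t - mean c)"
  have W: "Wf q \<tau>0 = (\<lambda>t. ee \<tau>0 t * E t)" unfolding Wf_def E_def a_def by (rule ext) simp
  have g0: "((\<lambda>t. - \<i> * q * CC t) has_vector_derivative D) (at t within {0..2*pi})"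
    unfolding D_def by (rule has_vector_derivative_mult_right[OF CC_deriv[OF t]])
  have g1: "((\<lambda>t. - \<i> * q * CC t - a) has_vector_derivative (D - 0)) (at t within {0..2*pi})"
    by (rule has_vector_derivative_diff[OF g0 has_vector_derivative_const])
  have e: "(exp has_field_derivative exp (- \<i> * q * CC t - a)) (at (- \<i> * q * CC t - a) within X)" for X
    by (rule has_field_derivative_at_within[OF DERIV_exp])
  have "(((\<lambda>t. exp t) \<circ> (\<lambda>t. - \<i> * q * CC t - a)) has_vector_derivative ((D - 0) * exp (- \<i> * q * CC t - a))) (at t within {0..2*pi})"
    by (rule field_vector_diff_chain_within[OF g1 e])
  then have gE: "(E has_vector_derivative (D * E t)) (at t within {0..2*pi})"
    unfolding E_def o_def by simp
  have "((\<lambda>t. ee \<tau>0 t * E t) has_vector_derivative (ee \<tau>0 t * (D * E t) + (\<i> * of_int \<tau>0 * ee \<tau>0 t) * E t)) (at t within {0..2*pi})"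
    by (rule has_vector_derivative_mult[OF ee_deriv gE])
  moreover have "ee \<tau>0 t * (D * E t) + (\<i> * of_int \<tau>0 * ee \<tau>0 t) * E t = (\<i> * of_int \<tau>0 - \<i> * q * (c t - mean c)) * (ee \<tau>0 t * E t)"
    unfolding D_def by algebra
  ultimately show ?thesis unfolding W by simp
qed

lemma Wf_cont: "continuous_on {0..2*pi} (Wf q \<tau>0)"
  by (rule continuous_on_vector_derivative[OF Wf_deriv])

lemma Wf_per: "Wf q \<tau>0 0 = Wf q \<tau>0 (2*pi)"
  by (simp add: Wf_def CC_0 CC_2pi)

lemma Wf_identity:
  "of_int \<sigma> * fcoef (Wf q \<tau>0) \<sigma> + q * infsum (\<lambda>\<rho>. fcoef c (\<sigma> - \<rho>) * fcoef (Wf q \<tau>0) \<rho>) UNIV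
     = (of_int \<tau>0 + mean c * q) * fcoef (Wf q \<tau>0) \<sigma>"
proof -
  let ?W = "Wf q \<tau>0"
  have d: "fcoef (\<lambda>t. (\<i> * of_int \<tau>0 - \<i> * q * (c t - mean c)) * ?W t) \<sigma> = \<i> * of_int \<sigma> * fcoef ?W \<sigma>"
    by (rule fcoef_ibp[OF Wf_deriv _ Wf_per]) (auto intro!: continuous_intros cc_cont Wf_cont)
  have "(\<lambda>t. (\<i> * of_int \<tau>0 - \<i> * q * (c t - mean c)) * ?W t) =
        (\<lambda>t. (\<i> * of_int \<tau>0 + \<i> * q * mean c) * ?W t - (\<i> * q) * (c t * ?W t))"
    by (rule ext) (simp add: algebra_simps)
  moreover have "fcoef (\<lambda>t. (\<i> * of_int \<tau>0 + \<i> * q * mean c) * ?W t - (\<i> * q) * (c t * ?W t)) \<sigma> =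
        (\<i> * of_int \<tau>0 + \<i> * q * mean c) * fcoef ?W \<sigma> - (\<i> * q) * fcoef (\<lambda>t. c t * ?W t) \<sigma>"
  proof -
    have c1: "continuous_on {0..2*pi} (\<lambda>t. (\<i> * of_int \<tau>0 + \<i> * q * mean c) * ?W t)"
      by (intro continuous_intros Wf_cont)
    have c2: "continuous_on {0..2*pi} (\<lambda>t. (\<i> * q) * (c t * ?W t))"
      by (intro continuous_intros Wf_cont cc_cont)
    show ?thesis by (simp only: fcoef_diff[OF c1 c2] fcoef_cmult)
  qed
  ultimately have "fcoef (\<lambda>t. (\<i> * of_int \<tau>0 - \<i> * q * (c t - mean c)) * ?W t) \<sigma> =
        (\<i> * of_int \<tau>0 + \<i> * q * mean c) * fcoef ?W \<sigma> - (\<i> * q) * fcoef (\<lambda>t. c t * ?W t) \<sigma>"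
    by simp
  moreover have "fcoef (\<lambda>t. c t * ?W t) \<sigma> = infsum (\<lambda>\<rho>. fcoef c (\<sigma> - \<rho>) * fcoef ?W \<rho>) UNIV"
    by (rule fcoef_conv_c[OF sc Wf_cont])
  ultimately have "\<i> * (of_int \<sigma> * fcoef ?W \<sigma> + q * infsum (\<lambda>\<rho>. fcoef c (\<sigma> - \<rho>) * fcoef ?W \<rho>) UNIV)
      = \<i> * ((of_int \<tau>0 + mean c * q) * fcoef ?W \<sigma>)"
    using d by (simp add: algebra_simps)
  then show ?thesis by simp
qed

end


lemma int_peetre: "1 + real_of_int \<bar>\<sigma> - \<tau>0\<bar> \<le> (1 + real_of_int \<bar>\<sigma> - \<rho>\<bar>) * (1 + real_of_int \<bar>\<rho> - \<tau>0\<bar>)"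
proof -
  define a where "a = real_of_int \<bar>\<sigma> - \<rho>\<bar>"
  define b where "b = real_of_int \<bar>\<rho> - \<tau>0\<bar>"
  have "real_of_int \<bar>\<sigma> - \<tau>0\<bar> \<le> a + b" unfolding a_def b_def by linarith
  moreover have "0 \<le> a * b" unfolding a_def b_def by simp
  moreover have "(1 + a) * (1 + b) = 1 + a + b + a * b" by (simp add: algebra_simps)
  ultimately show ?thesis unfolding a_def[symmetric] b_def[symmetric] by linarith
qed

context
  fixes c :: "real \<Rightarrow> complex"
  assumes sc: "smooth_periodic c"
begin

lemma Wf_coef_le1: "norm (fcoef (Wf c q \<tau>0) \<sigma>) \<le> 1"
  by (rule fcoef_bound[OF Wf_cont[OF sc] Wf_norm[OF sc]])

lemma Wf_decay: "\<exists>K\<ge>0. \<forall>q \<tau>0 \<sigma>. norm (fcoef (Wf c q \<tau>0) \<sigma>) * (1 + real_of_int \<bar>\<sigma> - \<tau>0\<bar>) ^ j \<le> K * (1 + norm q) ^ j"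
proof (induction j)
  case 0
  then show ?case using Wf_coef_le1 by (intro exI[of _ 1]) auto
next
  case (Suc j)
  then obtain K where K: "K \<ge> 0" "\<And>q \<tau>0 \<sigma>. norm (fcoef (Wf c q \<tau>0) \<sigma>) * (1 + real_of_int \<bar>\<sigma> - \<tau>0\<bar>) ^ j \<le> K * (1 + norm q) ^ j"
    by blast
  obtain B where B: "B \<ge> 0" "\<And>k. norm (fcoef c k) * (1 + real_of_int \<bar>k\<bar>) ^ (j + 2) \<le> B"
    using fcoef_decay[OF sc, of "j + 2"] by blast
  define K' where "K' = K * (1 + norm (mean c) + B * ZZ)"
  have K': "K' \<ge> 0" unfolding K'_def using K B ZZ_pos by simp
  have "norm (fcoef (Wf c q \<tau>0) \<sigma>) * (1 + real_of_int \<bar>\<sigma> - \<tau>0\<bar>) ^ Suc j \<le> K' * (1 + norm q) ^ Suc j" for q \<tau>0 \<sigma>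
  proof -
    define W where "W = fcoef (Wf c q \<tau>0)"
    define Q where "Q = (1 + norm q) ^ j"
    define x where "x = real_of_int \<bar>\<sigma> - \<tau>0\<bar>"
    have x: "x \<ge> 0" unfolding x_def by simp
    have Q: "Q \<ge> 0" unfolding Q_def by simp
    have IH: "norm (W \<rho>) * (1 + real_of_int \<bar>\<rho> - \<tau>0\<bar>) ^ j \<le> K * Q" for \<rho>
      unfolding W_def Q_def by (rule K(2))
    have trm: "norm (fcoef c (\<sigma> - \<rho>) * W \<rho>) \<le> (B * K * Q / (1 + x) ^ j) * wZ (\<sigma> - \<rho>)" for \<rho>
    proof -
      define a where "a = real_of_int \<bar>\<sigma> - \<rho>\<bar>"
      define b where "b = real_of_int \<bar>\<rho> - \<tau>0\<bar>"
      have ab: "a \<ge> 0" "b \<ge> 0" unfolding a_def b_def by auto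
      have pe: "(1 + x) ^ j \<le> (1 + a) ^ j * (1 + b) ^ j"
        unfolding power_mult_distrib[symmetric] a_def b_def x_def
        by (rule power_mono[OF int_peetre]) simp
      have cb: "norm (fcoef c (\<sigma> - \<rho>)) * (1 + a) ^ (j + 2) \<le> B" unfolding a_def by (rule B(2))
      have wb: "norm (W \<rho>) * (1 + b) ^ j \<le> K * Q" unfolding b_def by (rule IH)
      have "norm (fcoef c (\<sigma> - \<rho>) * W \<rho>) * (1 + x) ^ j \<le>
            norm (fcoef c (\<sigma> - \<rho>)) * norm (W \<rho>) * ((1 + a) ^ j * (1 + b) ^ j)"
        unfolding norm_mult by (rule mult_left_mono[OF pe]) simp
      also have "\<dots> = (norm (fcoef c (\<sigma> - \<rho>)) * (1 + a) ^ (j + 2)) * (norm (W \<rho>) * (1 + b) ^ j) / (1 + a)\<^sup>2"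
      proof -
        define p2 where "p2 = (1 + a)\<^sup>2"
        have p2: "p2 \<noteq> 0" using ab by (simp add: p2_def)
        have "(1 + a) ^ (j + 2) = (1 + a) ^ j * p2" unfolding p2_def by (rule power_add)
        then show ?thesis unfolding p2_def[symmetric] using p2 by (simp add: field_simps)
      qed
      also have "\<dots> \<le> B * (K * Q) / (1 + a)\<^sup>2"
        using ab by (intro divide_right_mono mult_mono cb wb) (auto simp: B(1))
      finally have "norm (fcoef c (\<sigma> - \<rho>) * W \<rho>) * (1 + x) ^ j \<le> B * K * Q * wZ (\<sigma> - \<rho>)"
        by (simp add: wZ_def a_def)
      then show ?thesis using x by (simp add: field_simps)
    qed
    define S where "S = infsum (\<lambda>\<rho>. fcoef c (\<sigma> - \<rho>) * W \<rho>) UNIV"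
    have Sb: "norm S \<le> (B * K * Q / (1 + x) ^ j) * ZZ"
      unfolding S_def by (rule dom_summable(2)[OF trm])
    have Sb': "norm S * (1 + x) ^ j \<le> B * K * Q * ZZ"
      using Sb x by (simp add: field_simps)
    have idt: "of_int \<sigma> * W \<sigma> + q * S = (of_int \<tau>0 + mean c * q) * W \<sigma>"
      unfolding W_def S_def by (rule Wf_identity[OF sc])
    have eq: "of_int (\<sigma> - \<tau>0) * W \<sigma> = mean c * q * W \<sigma> - q * S"
      using idt by (simp add: algebra_simps)
    have "norm (of_int (\<sigma> - \<tau>0) * W \<sigma>) \<le> norm q * (norm (mean c) * norm (W \<sigma>) + norm S)"
      unfolding eq using norm_triangle_ineq4[of "mean c * q * W \<sigma>" "q * S"]
      by (simp add: norm_mult algebra_simps)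
    moreover have "norm (of_int (\<sigma> - \<tau>0) * W \<sigma>) = x * norm (W \<sigma>)"
      unfolding x_def norm_mult by (simp only: norm_of_int of_int_abs)
    ultimately have "x * norm (W \<sigma>) \<le> norm q * (norm (mean c) * norm (W \<sigma>) + norm S)" by simp
    then have "x * norm (W \<sigma>) * (1 + x) ^ j \<le> norm q * (norm (mean c) * (norm (W \<sigma>) * (1 + x) ^ j) + norm S * (1 + x) ^ j)"
      using mult_right_mono[OF \<open>x * norm (W \<sigma>) \<le> _\<close>, of "(1 + x) ^ j"] x by (simp add: algebra_simps)
    also have "\<dots> \<le> norm q * (norm (mean c) * (K * Q) + B * K * Q * ZZ)"
      using IH[of \<sigma>] Sb' unfolding x_def
      by (intro mult_left_mono add_mono) (auto simp: mult_left_mono)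
    finally have A: "x * norm (W \<sigma>) * (1 + x) ^ j \<le> norm q * K * Q * (norm (mean c) + B * ZZ)"
      by (simp add: algebra_simps)
    have "norm (W \<sigma>) * (1 + x) ^ Suc j = norm (W \<sigma>) * (1 + x) ^ j + x * norm (W \<sigma>) * (1 + x) ^ j"
      by (simp add: algebra_simps)
    also have "\<dots> \<le> K * Q + norm q * K * Q * (norm (mean c) + B * ZZ)"
      using IH[of \<sigma>] A unfolding x_def by simp
    also have "\<dots> \<le> K' * (1 + norm q) ^ Suc j"
    proof -
      have "K * Q + norm q * K * Q * (norm (mean c) + B * ZZ) \<le> K * Q * (1 + norm q) * (1 + norm (mean c) + B * ZZ)"
        using K(1) Q B(1) ZZ_pos by (simp add: algebra_simps mult_nonneg_nonneg add_nonneg_nonneg)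
      also have "\<dots> = K' * (1 + norm q) ^ Suc j" unfolding K'_def Q_def by (simp add: algebra_simps)
      finally show ?thesis .
    qed
    finally show ?thesis unfolding W_def x_def .
  qed
  then show ?case using K' by blast
qed


lemma Wf_bound_wZ:
  obtains K where "K \<ge> 0" "\<And>q \<tau>0 \<sigma>. norm (fcoef (Wf c q \<tau>0) \<sigma>) \<le> K * (1 + norm q) ^ 4 * (wZ (\<tau>0 - \<sigma>))\<^sup>2"
proof -
  obtain K where K: "K \<ge> 0" "\<And>q \<tau>0 \<sigma>. norm (fcoef (Wf c q \<tau>0) \<sigma>) * (1 + real_of_int \<bar>\<sigma> - \<tau>0\<bar>) ^ 4 \<le> K * (1 + norm q) ^ 4"
    using Wf_decay[of 4] by blast
  have "norm (fcoef (Wf c q \<tau>0) \<sigma>) \<le> K * (1 + norm q) ^ 4 * (wZ (\<tau>0 - \<sigma>))\<^sup>2" for q \<tau>0 \<sigma>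
  proof -
    have p: "(1 + real_of_int \<bar>\<sigma> - \<tau>0\<bar>) ^ 4 > 0" by (simp add: add_pos_nonneg)
    have "\<bar>\<tau>0 - \<sigma>\<bar> = \<bar>\<sigma> - \<tau>0\<bar>" by simp
    then have w: "(wZ (\<tau>0 - \<sigma>))\<^sup>2 * (1 + real_of_int \<bar>\<sigma> - \<tau>0\<bar>) ^ 4 = 1"
      unfolding wZ_def using p by (simp add: power_divide flip: power_mult)
    have "norm (fcoef (Wf c q \<tau>0) \<sigma>) = (norm (fcoef (Wf c q \<tau>0) \<sigma>) * (1 + real_of_int \<bar>\<sigma> - \<tau>0\<bar>) ^ 4) * (wZ (\<tau>0 - \<sigma>))\<^sup>2"
      using w by (simp add: mult_ac)
    also have "\<dots> \<le> K * (1 + norm q) ^ 4 * (wZ (\<tau>0 - \<sigma>))\<^sup>2"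
      by (rule mult_right_mono[OF K(2)]) simp
    finally show ?thesis .
  qed
  then show ?thesis using that K(1) by blast
qed

lemma Wf_summable: "(\<lambda>\<sigma>. norm (fcoef (Wf c q \<tau>0) \<sigma>)) summable_on UNIV"
proof -
  obtain K where K: "K \<ge> 0" "\<And>q \<tau>0 \<sigma>. norm (fcoef (Wf c q \<tau>0) \<sigma>) \<le> K * (1 + norm q) ^ 4 * (wZ (\<tau>0 - \<sigma>))\<^sup>2"
    using Wf_bound_wZ by blast
  have "norm (fcoef (Wf c q \<tau>0) \<sigma>) \<le> (K * (1 + norm q) ^ 4) * wZ (\<tau>0 - \<sigma>)" for \<sigma>
  proof -
    have "wZ (\<tau>0 - \<sigma>) \<le> 1" unfolding wZ_def by (simp add: field_simps)
    then have "(wZ (\<tau>0 - \<sigma>))\<^sup>2 \<le> wZ (\<tau>0 - \<sigma>)" using wZ_pos[of "\<tau>0 - \<sigma>"]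
      by (simp add: power2_eq_square mult_le_cancel_right1)
    then show ?thesis using K(2)[of q \<tau>0 \<sigma>] K(1) by (meson mult_left_mono order_trans zero_le_power add_nonneg_nonneg norm_ge_zero zero_le_one mult_nonneg_nonneg)
  qed
  then show ?thesis by (rule dom_summable(1))
qed

lemma Wf_lower: "\<exists>L>0. \<forall>q \<tau>0. \<exists>\<sigma>. L / (1 + norm q) ^ 4 \<le> norm (fcoef (Wf c q \<tau>0) \<sigma>)"
proof -
  obtain K where K: "K \<ge> 0" "\<And>q \<tau>0 \<sigma>. norm (fcoef (Wf c q \<tau>0) \<sigma>) \<le> K * (1 + norm q) ^ 4 * (wZ (\<tau>0 - \<sigma>))\<^sup>2"
    using Wf_bound_wZ by blast
  define L where "L = 1 / (4 * (K + 1) * (ZZ + 1)\<^sup>2)"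
  have L: "L > 0" unfolding L_def using K(1) ZZ_pos by (simp add: add_pos_nonneg)
  have "\<exists>\<sigma>. L / (1 + norm q) ^ 4 \<le> norm (fcoef (Wf c q \<tau>0) \<sigma>)" for q \<tau>0
  proof (rule ccontr)
    assume "\<not> ?thesis"
    then have small: "norm (fcoef (Wf c q \<tau>0) \<sigma>) < L / (1 + norm q) ^ 4" for \<sigma> by (auto simp: not_le)
    define W where "W = fcoef (Wf c q \<tau>0)"
    define M where "M = K * (1 + norm q) ^ 4"
    define e where "e = L / (1 + norm q) ^ 4"
    have M: "M \<ge> 0" unfolding M_def using K(1) by simp
    have eM: "e * M \<le> 1 / (4 * (ZZ + 1)\<^sup>2)"
    proof -
      have "1 + norm q > 0" by (smt (verit) norm_ge_zero)
      then have "1 + norm q \<noteq> 0" by simp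
      then have "e * M = L * K" unfolding e_def M_def by simp
      also have "\<dots> = K / (4 * (K + 1) * (ZZ + 1)\<^sup>2)" unfolding L_def by simp
      finally have "e * M = K / (4 * (K + 1) * (ZZ + 1)\<^sup>2)" .
      also have "\<dots> \<le> (K + 1) / (4 * (K + 1) * (ZZ + 1)\<^sup>2)"
        using K(1) ZZ_pos by (intro divide_right_mono) auto
      also have "\<dots> = 1 / (4 * (ZZ + 1)\<^sup>2)"
      proof -
        have aux: "a / (4 * a * b) = 1 / (4 * b)" if "a \<noteq> 0" for a b :: real
          using that by (cases "b = 0") (simp_all add: field_simps)
        have "K + 1 \<noteq> 0" using K(1) by simp
        from aux[OF this] show ?thesis .
      qed
      finally show ?thesis .
    qed
    have q1: "1 + norm q > 0" by (smt (verit) norm_ge_zero)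
    have e0: "e \<ge> 0" unfolding e_def using L q1 by simp
    have em0: "e * M \<ge> 0" using e0 M by simp
    define r where "r = sqrt (e * M)"
    have r: "r \<ge> 0" "r \<le> 1 / (2 * (ZZ + 1))"
    proof -
      show "r \<ge> 0" unfolding r_def using em0 by simp
      have "sqrt (e * M) \<le> sqrt (1 / (4 * (ZZ + 1)\<^sup>2))" by (rule real_sqrt_le_mono[OF eM])
      also have "\<dots> = 1 / (2 * (ZZ + 1))" using ZZ_pos
        by (simp add: real_sqrt_divide real_sqrt_mult power2_eq_square)
      finally show "r \<le> 1 / (2 * (ZZ + 1))" unfolding r_def .
    qed
    have bW: "norm (W \<sigma>) \<le> r * wZ (\<tau>0 - \<sigma>)" for \<sigma>
    proof -
      have a: "norm (W \<sigma>) \<le> e" using small[of \<sigma>] unfolding W_def e_def by simp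
      have b: "norm (W \<sigma>) \<le> M * (wZ (\<tau>0 - \<sigma>))\<^sup>2" using K(2)[of q \<tau>0 \<sigma>] unfolding W_def M_def by simp
      have "(norm (W \<sigma>))\<^sup>2 \<le> e * (M * (wZ (\<tau>0 - \<sigma>))\<^sup>2)"
        unfolding power2_eq_square by (rule mult_mono[OF a b[unfolded power2_eq_square]]) (auto simp: e0 intro: order_trans[OF norm_ge_zero a])
      also have "\<dots> = (r * wZ (\<tau>0 - \<sigma>))\<^sup>2" unfolding r_def using em0 by (simp add: power_mult_distrib)
      finally show ?thesis by (rule power2_le_imp_le) (use r wZ_pos[of "\<tau>0 - \<sigma>"] in auto)
    qed
    have t: "tmax c q \<in> {0..2*pi}" by (rule tmax(1)[OF sc])
    have "1 = norm (Wf c q \<tau>0 (tmax c q))" using Wf_norm_max[OF sc] by simp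
    also have "\<dots> = norm (infsum (\<lambda>\<sigma>. W \<sigma> * ee \<sigma> (tmax c q)) UNIV)"
      unfolding W_def by (subst fourier_inversion[OF Wf_cont[OF sc] Wf_per[OF sc] Wf_summable t]) simp
    also have "\<dots> \<le> r * ZZ"
      by (rule dom_summable(2)[where a=\<tau>0]) (simp add: norm_mult bW)
    also have "\<dots> \<le> ZZ / (2 * (ZZ + 1))"
      using mult_right_mono[OF r(2) ZZ_pos] by simp
    also have "\<dots> < 1" using ZZ_pos by (simp add: divide_simps)
    finally show False by simp
  qed
  then show ?thesis using L by blast
qed

end


context
  fixes c :: "real \<Rightarrow> complex" and p :: "int ^ ('n::finite) \<Rightarrow> complex"
  assumes sc: "smooth_periodic c" and pg: "pgrowth p"
begin

definition ss :: "int \<Rightarrow> int ^ 'n \<Rightarrow> complex" where "ss \<tau> \<xi> = of_int \<tau> + mean c * p \<xi>"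

lemma L0op_eq: "L0op c p u (\<tau>, \<xi>) = ss \<tau> \<xi> * u (\<tau>, \<xi>)"
  by (simp add: L0op_def Dt_def PDx_def ss_def algebra_simps)

lemma seq_exists:
  assumes ngh: "\<not> globally_hypoelliptic (L0op c p :: 'n coef \<Rightarrow> 'n coef)"
  shows "\<exists>\<tau> \<xi>. inorm \<xi> \<ge> R \<and> norm (ss \<tau> \<xi>) \<le> (1 + fnorm (\<tau>, \<xi>)) powr (- real N)"
proof -
  obtain u :: "'n coef" where ud: "is_distribution u" and ls: "is_smooth (L0op c p u)" and nus: "\<not> is_smooth u"
    using ngh unfolding globally_hypoelliptic_def by blast
  obtain r where nb: "\<not> bnd u r" using nus unfolding smooth_bnd by blast
  obtain r0 where b0: "bnd u r0" using ud unfolding distribution_bnd by blast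
  obtain A0 where A0: "A0 \<ge> 0" "\<And>\<eta>. norm (u \<eta>) \<le> A0 * (1 + fnorm \<eta>) powr r0" using bndE[OF b0] by blast
  have rr: "r < r0"
  proof (rule ccontr)
    assume "\<not> r < r0"
    then have "bnd u r" by (intro bnd_mono[OF b0]) simp
    then show False using nb by simp
  qed
  obtain B where B: "B \<ge> 0" "\<And>\<eta>. norm (L0op c p u \<eta>) \<le> B * (1 + fnorm \<eta>) powr (r - real N)"
    using bndE[of "L0op c p u" "r - real N"] ls unfolding smooth_bnd by blast
  obtain Cp dp where Cp: "Cp \<ge> 0" "dp \<ge> 0" "\<And>\<xi>. norm (p \<xi>) \<le> Cp * (1 + inorm \<xi>) powr dp"
    using pgrowth_bound[OF pg] by blast
  define R' where "R' = max R 0"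
  define R1 where "R1 = 1 + norm (mean c) * Cp * (1 + R') powr dp + R'"
  have R1: "R1 \<ge> 0" unfolding R1_def R'_def using Cp by simp
  define A where "A = max (max B 1) (A0 * (1 + R1) powr (r0 - r))"
  have A: "A \<ge> B" "A \<ge> 1" "A \<ge> A0 * (1 + R1) powr (r0 - r)" unfolding A_def by auto
  have "\<exists>\<eta>. \<not> norm (u \<eta>) \<le> A * (1 + fnorm \<eta>) powr r"
  proof (rule ccontr)
    assume "\<not> ?thesis"
    then have "\<forall>\<eta>. norm (u \<eta>) \<le> A * (1 + fnorm \<eta>) powr r" by simp
    then have "bnd u r" unfolding bnd_def by (rule exI)
    then show False using nb by simp
  qed
  then obtain \<eta> where \<eta>: "\<not> norm (u \<eta>) \<le> A * (1 + fnorm \<eta>) powr r" by (elim exE)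
  obtain \<tau> \<xi> where e: "\<eta> = (\<tau>, \<xi>)" by (cases \<eta>) simp
  define P where "P = 1 + fnorm \<eta>"
  have P: "P \<ge> 1" unfolding P_def using fnorm_nonneg[of \<eta>] by simp
  have uA: "norm (u \<eta>) > A * P powr r" using \<eta> unfolding P_def by simp
  have big: "fnorm \<eta> > R1"
  proof (rule ccontr)
    assume "\<not> fnorm \<eta> > R1"
    then have "P \<le> 1 + R1" unfolding P_def by simp
    then have "P powr (r0 - r) \<le> (1 + R1) powr (r0 - r)" using rr P by (intro powr_mono2) auto
    then have "A0 * P powr (r0 - r) \<le> A" using A(3) A0(1) by (meson mult_left_mono order_trans)
    then have "(A0 * P powr (r0 - r)) * P powr r \<le> A * P powr r" by (rule mult_right_mono) simp
    moreover have "(A0 * P powr (r0 - r)) * P powr r = A0 * P powr r0"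
      using P by (simp add: mult.assoc powr_add[symmetric])
    ultimately have "A0 * P powr r0 \<le> A * P powr r" by simp
    then show False using uA A0(2)[of \<eta>] unfolding P_def by simp
  qed
  have sm: "norm (ss \<tau> \<xi>) \<le> P powr (- real N)"
  proof -
    have "norm (ss \<tau> \<xi>) * norm (u \<eta>) \<le> B * P powr (r - real N)"
      using B(2)[of \<eta>] unfolding e P_def by (simp add: L0op_eq norm_mult)
    also have "\<dots> \<le> A * P powr (r - real N)" using A(1) by (intro mult_right_mono) auto
    also have "\<dots> = (A * P powr r) * P powr (- real N)" using P by (simp add: powr_add[symmetric] mult.assoc)
    finally have 1: "norm (ss \<tau> \<xi>) * norm (u \<eta>) \<le> (A * P powr r) * P powr (- real N)" .
    have pos: "A * P powr r > 0" using A(2) P by simp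
    have "norm (ss \<tau> \<xi>) * (A * P powr r) \<le> norm (ss \<tau> \<xi>) * norm (u \<eta>)"
      using uA by (intro mult_left_mono) auto
    with 1 have "norm (ss \<tau> \<xi>) * (A * P powr r) \<le> P powr (- real N) * (A * P powr r)" by (simp add: mult.commute)
    then show ?thesis using pos by (rule mult_right_le_imp_le)
  qed
  have s1: "norm (ss \<tau> \<xi>) \<le> 1"
  proof -
    have "P powr (- real N) \<le> P powr 0" using P by (intro powr_mono) auto
    then have "P powr (- real N) \<le> 1" using P by simp
    then show ?thesis using sm by simp
  qed
  have "inorm \<xi> \<ge> R'"
  proof (rule ccontr)
    assume "\<not> inorm \<xi> \<ge> R'"
    then have lt: "inorm \<xi> < R'" by simp
    have "real_of_int \<bar>\<tau>\<bar> = norm (ss \<tau> \<xi> - mean c * p \<xi>)" by (simp add: ss_def)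
    also have "\<dots> \<le> norm (ss \<tau> \<xi>) + norm (mean c) * norm (p \<xi>)" using norm_triangle_ineq4[of "ss \<tau> \<xi>" "mean c * p \<xi>"] by (simp only: norm_mult)
    also have "\<dots> \<le> 1 + norm (mean c) * (Cp * (1 + R') powr dp)"
    proof -
      have "(1 + inorm \<xi>) powr dp \<le> (1 + R') powr dp" using lt inorm_nonneg[of \<xi>] Cp(2) by (intro powr_mono2) auto
      then have "norm (p \<xi>) \<le> Cp * (1 + R') powr dp" using Cp(3)[of \<xi>] Cp(1) by (meson mult_left_mono order_trans)
      then show ?thesis using s1 by (intro add_mono mult_left_mono) auto
    qed
    finally have "fnorm \<eta> \<le> 1 + norm (mean c) * (Cp * (1 + R') powr dp) + inorm \<xi>"
      using fnorm_le_sum[of \<tau> \<xi>] unfolding e by simp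
    then have "fnorm \<eta> < R1" unfolding R1_def using lt by (simp add: mult.assoc)
    then show False using big by simp
  qed
  then have "inorm \<xi> \<ge> R" unfolding R'_def by simp
  then show ?thesis using sm unfolding P_def e by blast
qed


lemma powr_pow: "x > 0 \<Longrightarrow> (x powr a) ^ n = x powr (real n * a)"
  for x a :: real
  by (simp add: powr_realpow[symmetric] powr_powr mult.commute)

definition kap :: "(nat \<Rightarrow> int ^ 'n) \<Rightarrow> int ^ 'n \<Rightarrow> nat" where
  "kap xx \<xi> = (LEAST k. xx k = \<xi>)"

lemma kap: "\<xi> \<in> range xx \<Longrightarrow> xx (kap xx \<xi>) = \<xi>"
  unfolding kap_def by (rule LeastI_ex) auto

definition vv :: "(nat \<Rightarrow> int) \<Rightarrow> (nat \<Rightarrow> int ^ 'n) \<Rightarrow> 'n coef" where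
  "vv tt xx = (\<lambda>(\<tau>, \<xi>). if \<xi> \<in> range xx then fcoef (Wf c (p \<xi>) (tt (kap xx \<xi>))) \<tau> else 0)"

lemma vv_app: "vv tt xx (\<tau>, \<xi>) = (if \<xi> \<in> range xx then fcoef (Wf c (p \<xi>) (tt (kap xx \<xi>))) \<tau> else 0)"
  by (simp add: vv_def)

lemma vv_dist: "is_distribution (vv tt xx)"
proof -
  have "norm (vv tt xx \<eta>) \<le> 1 * (1 + fnorm \<eta>) ^ 0" for \<eta>
    by (cases \<eta>) (simp add: vv_app Wf_coef_le1[OF sc])
  then show ?thesis unfolding is_distribution_def by blast
qed

lemma Lop_vv: "Lop c p (vv tt xx) (\<tau>, \<xi>) =
   (if \<xi> \<in> range xx then ss (tt (kap xx \<xi>)) \<xi> * fcoef (Wf c (p \<xi>) (tt (kap xx \<xi>))) \<tau> else 0)"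
proof -
  have L: "Lop c p (vv tt xx) (\<tau>, \<xi>) = of_int \<tau> * vv tt xx (\<tau>, \<xi>) +
      infsum (\<lambda>\<sigma>. fcoef c (\<tau> - \<sigma>) * (p \<xi> * vv tt xx (\<sigma>, \<xi>))) UNIV"
    by (simp add: Lop_def Dt_def mult_t_def PDx_def)
  show ?thesis
  proof (cases "\<xi> \<in> range xx")
    case True
    define W where "W = fcoef (Wf c (p \<xi>) (tt (kap xx \<xi>)))"
    have "infsum (\<lambda>\<sigma>. fcoef c (\<tau> - \<sigma>) * (p \<xi> * vv tt xx (\<sigma>, \<xi>))) UNIV =
          infsum (\<lambda>\<sigma>. p \<xi> * (fcoef c (\<tau> - \<sigma>) * W \<sigma>)) UNIV"
      using True by (simp add: vv_app W_def mult.left_commute)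
    also have "\<dots> = p \<xi> * infsum (\<lambda>\<sigma>. fcoef c (\<tau> - \<sigma>) * W \<sigma>) UNIV"
      by (rule infsum_cmult_right')
    finally have "Lop c p (vv tt xx) (\<tau>, \<xi>) = of_int \<tau> * W \<tau> + p \<xi> * infsum (\<lambda>\<sigma>. fcoef c (\<tau> - \<sigma>) * W \<sigma>) UNIV"
      using L True by (simp add: vv_app W_def)
    also have "\<dots> = ss (tt (kap xx \<xi>)) \<xi> * W \<tau>"
      unfolding W_def ss_def by (rule Wf_identity[OF sc])
    finally show ?thesis using True by (simp add: W_def)
  next
    case False
    then show ?thesis using L by (simp add: vv_app)
  qed
qed

lemma vv_lop_smooth:
  assumes seq1: "\<And>k. inorm (xx k) \<ge> real k"
    and seq2: "\<And>k. norm (ss (tt k) (xx k)) \<le> (1 + fnorm (tt k, xx k)) powr (- real k)"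
  shows "is_smooth (Lop c p (vv tt xx))"
proof -
  obtain Cp dp where Cp: "Cp \<ge> 0" "dp \<ge> 0" "\<And>\<xi>. norm (p \<xi>) \<le> Cp * (1 + inorm \<xi>) powr dp"
    using pgrowth_bound[OF pg] by blast
  have bj: "bnd (Lop c p (vv tt xx)) (- real j)" for j :: nat
  proof -
    obtain K where K: "K \<ge> 0" "\<And>q \<tau>0 \<sigma>. norm (fcoef (Wf c q \<tau>0) \<sigma>) * (1 + real_of_int \<bar>\<sigma> - \<tau>0\<bar>) ^ j \<le> K * (1 + norm q) ^ j"
      using Wf_decay[OF sc, of j] by blast
    define G where "G = real j + real j * dp"
    define Mx where "Mx = 1 + (\<Sum>k<nat \<lceil>G\<rceil>. (1 + fnorm (tt k, xx k)) powr G)"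
    have Mx: "(1 + fnorm (tt k, xx k)) powr (G - real k) \<le> Mx" for k
    proof -
      have F1: "1 + fnorm (tt k, xx k) \<ge> 1" using fnorm_nonneg[of "(tt k, xx k)"] by simp
      have sn: "0 \<le> (\<Sum>k<nat \<lceil>G\<rceil>. (1 + fnorm (tt k, xx k)) powr G)" by (intro sum_nonneg) simp
      show ?thesis
      proof (cases "k < nat \<lceil>G\<rceil>")
        case True
        have "(1 + fnorm (tt k, xx k)) powr (G - real k) \<le> (1 + fnorm (tt k, xx k)) powr G"
          using F1 by (intro powr_mono) auto
        also have "\<dots> \<le> (\<Sum>k<nat \<lceil>G\<rceil>. (1 + fnorm (tt k, xx k)) powr G)"
          using True by (intro member_le_sum) auto
        finally show ?thesis unfolding Mx_def by simp
      next
        case False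
        then have "G - real k \<le> 0" by linarith
        then have "(1 + fnorm (tt k, xx k)) powr (G - real k) \<le> (1 + fnorm (tt k, xx k)) powr 0"
          using F1 by (intro powr_mono) auto
        then show ?thesis unfolding Mx_def using F1 sn by simp
      qed
    qed
    have Mx0: "Mx \<ge> 0" using Mx[of 0] by (smt (verit) powr_ge_zero)
    define A where "A = K * (1 + Cp) ^ j * Mx"
    have "norm (Lop c p (vv tt xx) (\<tau>, \<xi>)) \<le> A * (1 + fnorm (\<tau>, \<xi>)) powr (- real j)" for \<tau> \<xi>
    proof (cases "\<xi> \<in> range xx")
      case False
      then show ?thesis by (simp add: Lop_vv A_def K(1) Cp(1) Mx0)
    next
      case True
      define k where "k = kap xx \<xi>"
      have xk: "xx k = \<xi>" unfolding k_def by (rule kap[OF True])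
      define \<tau>0 where "\<tau>0 = tt k"
      define q where "q = p \<xi>"
      define W where "W = fcoef (Wf c q \<tau>0)"
      define F0 where "F0 = 1 + fnorm (\<tau>0, \<xi>)"
      define Fe where "Fe = 1 + fnorm (\<tau>, \<xi>)"
      define x where "x = real_of_int \<bar>\<tau> - \<tau>0\<bar>"
      have F0: "F0 \<ge> 1" unfolding F0_def using fnorm_nonneg[of "(\<tau>0, \<xi>)"] by simp
      have Fe: "Fe \<ge> 1" unfolding Fe_def using fnorm_nonneg[of "(\<tau>, \<xi>)"] by simp
      have x: "x \<ge> 0" unfolding x_def by simp
      have eq: "Lop c p (vv tt xx) (\<tau>, \<xi>) = ss \<tau>0 \<xi> * W \<tau>"
        using True by (simp add: Lop_vv W_def q_def \<tau>0_def k_def)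
      have a: "norm (ss \<tau>0 \<xi>) \<le> F0 powr (- real k)"
        using seq2[of k] unfolding xk F0_def \<tau>0_def .
      have b: "norm (W \<tau>) * (1 + x) ^ j \<le> K * (1 + norm q) ^ j"
        unfolding W_def x_def by (rule K(2))
      have c: "Fe ^ j \<le> (1 + x) ^ j * F0 ^ j"
        unfolding power_mult_distrib[symmetric] Fe_def x_def F0_def
        by (rule power_mono[OF peetre1]) (use fnorm_nonneg[of "(\<tau>, \<xi>)"] in simp)
      have d: "(1 + norm q) ^ j \<le> (1 + Cp) ^ j * F0 powr (real j * dp)"
      proof -
        have "norm q \<le> Cp * (1 + inorm \<xi>) powr dp" unfolding q_def by (rule Cp(3))
        also have "\<dots> \<le> Cp * F0 powr dp"
          unfolding F0_def using inorm_le_fnorm[of \<xi> \<tau>0] inorm_nonneg[of \<xi>] Cp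
          by (intro mult_left_mono powr_mono2) auto
        finally have nq: "norm q \<le> Cp * F0 powr dp" .
        have "1 \<le> F0 powr dp" using F0 Cp(2) by (simp add: ge_one_powr_ge_zero)
        then have "1 + norm q \<le> (1 + Cp) * F0 powr dp" using nq by (simp add: algebra_simps)
        then have "(1 + norm q) ^ j \<le> ((1 + Cp) * F0 powr dp) ^ j" by (intro power_mono) auto
        also have "\<dots> = (1 + Cp) ^ j * F0 powr (real j * dp)"
          using F0 by (simp add: power_mult_distrib powr_pow)
        finally show ?thesis .
      qed
      have "norm (Lop c p (vv tt xx) (\<tau>, \<xi>)) * Fe ^ j \<le> norm (ss \<tau>0 \<xi>) * norm (W \<tau>) * ((1 + x) ^ j * F0 ^ j)"
        unfolding eq norm_mult by (intro mult_left_mono c) auto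
      also have "\<dots> = norm (ss \<tau>0 \<xi>) * (norm (W \<tau>) * (1 + x) ^ j) * F0 ^ j" by (simp add: mult_ac)
      also have "\<dots> \<le> F0 powr (- real k) * (K * (1 + norm q) ^ j) * F0 ^ j"
      proof -
        have "norm (ss \<tau>0 \<xi>) * (norm (W \<tau>) * (1 + x) ^ j) \<le> F0 powr (- real k) * (K * (1 + norm q) ^ j)"
          by (rule mult_mono[OF a b]) (use x in auto)
        then show ?thesis by (rule mult_right_mono) (use F0 in simp)
      qed
      also have "\<dots> \<le> F0 powr (- real k) * (K * ((1 + Cp) ^ j * F0 powr (real j * dp))) * F0 ^ j"
        by (intro mult_right_mono mult_left_mono d) (use K(1) F0 in auto)
      also have "\<dots> = K * (1 + Cp) ^ j * F0 powr (G - real k)"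
        using F0 unfolding G_def by (simp add: powr_realpow[symmetric] powr_add[symmetric] mult_ac algebra_simps)
      also have "\<dots> \<le> K * (1 + Cp) ^ j * Mx"
        using Mx[of k] K(1) Cp(1) unfolding F0_def \<tau>0_def xk[symmetric] by (intro mult_left_mono) auto
      finally have NA: "norm (Lop c p (vv tt xx) (\<tau>, \<xi>)) * Fe ^ j \<le> A" unfolding A_def .
      have fe: "Fe ^ j * Fe powr (- real j) = 1" using Fe by (simp add: powr_minus powr_realpow)
      have "norm (Lop c p (vv tt xx) (\<tau>, \<xi>)) = (norm (Lop c p (vv tt xx) (\<tau>, \<xi>)) * Fe ^ j) * Fe powr (- real j)"
        using fe by (simp add: mult.assoc)
      also have "\<dots> \<le> A * Fe powr (- real j)" by (rule mult_right_mono[OF NA]) simp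
      finally show ?thesis unfolding Fe_def .
    qed
    then have "\<forall>\<eta>. norm (Lop c p (vv tt xx) \<eta>) \<le> A * (1 + fnorm \<eta>) powr (- real j)"
      by (simp add: split_paired_all)
    then show ?thesis unfolding bnd_def by blast
  qed
  have "bnd (Lop c p (vv tt xx)) R" for R
    by (rule bnd_mono[OF bj[of "nat \<lceil>- R\<rceil>"]]) linarith
  then show ?thesis unfolding smooth_bnd by blast
qed

lemma vv_not_smooth:
  assumes seq1: "\<And>k. inorm (xx k) \<ge> real k"
  shows "\<not> is_smooth (vv tt xx)"
proof
  assume sm: "is_smooth (vv tt xx)"
  obtain Cp dp where Cp: "Cp \<ge> 0" "dp \<ge> 0" "\<And>\<xi>. norm (p \<xi>) \<le> Cp * (1 + inorm \<xi>) powr dp"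
    using pgrowth_bound[OF pg] by blast
  obtain L where L: "L > 0" "\<And>q \<tau>0. \<exists>\<sigma>. L / (1 + norm q) ^ 4 \<le> norm (fcoef (Wf c q \<tau>0) \<sigma>)"
    using Wf_lower[OF sc] by blast
  have "bnd (vv tt xx) (- (4 * dp + 1))" using sm unfolding smooth_bnd by blast
  then obtain A where A: "A \<ge> 0" "\<And>\<eta>. norm (vv tt xx \<eta>) \<le> A * (1 + fnorm \<eta>) powr (- (4 * dp + 1))"
    using bndE by blast
  define Q where "Q = A * (1 + Cp) ^ 4 / L"
  have bound: "1 + inorm (xx k) \<le> Q" for k
  proof -
    define \<xi> where "\<xi> = xx k"
    have rng: "\<xi> \<in> range xx" unfolding \<xi>_def by simp
    define I where "I = 1 + inorm \<xi>"
    have I: "I \<ge> 1" unfolding I_def using inorm_nonneg[of \<xi>] by simp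
    obtain \<sigma> where \<sigma>: "L / (1 + norm (p \<xi>)) ^ 4 \<le> norm (fcoef (Wf c (p \<xi>) (tt (kap xx \<xi>))) \<sigma>)"
      using L(2) by blast
    have "norm (fcoef (Wf c (p \<xi>) (tt (kap xx \<xi>))) \<sigma>) = norm (vv tt xx (\<sigma>, \<xi>))"
      using rng by (simp add: vv_app)
    also have "\<dots> \<le> A * (1 + fnorm (\<sigma>, \<xi>)) powr (- (4 * dp + 1))" by (rule A(2))
    also have "\<dots> \<le> A * I powr (- (4 * dp + 1))"
      unfolding I_def using inorm_le_fnorm[of \<xi> \<sigma>] inorm_nonneg[of \<xi>] Cp(2) A(1)
      by (intro mult_left_mono powr_mono2') auto
    finally have 1: "L / (1 + norm (p \<xi>)) ^ 4 \<le> A * I powr (- (4 * dp + 1))" using \<sigma> by simp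
    have "1 + norm (p \<xi>) \<le> (1 + Cp) * I powr dp"
    proof -
      have "1 \<le> I powr dp" using I Cp(2) by (simp add: ge_one_powr_ge_zero)
      then show ?thesis using Cp(3)[of \<xi>] unfolding I_def by (simp add: algebra_simps)
    qed
    moreover have pn: "0 \<le> 1 + norm (p \<xi>)" using norm_ge_zero[of "p \<xi>"] by linarith
    ultimately have "(1 + norm (p \<xi>)) ^ 4 \<le> ((1 + Cp) * I powr dp) ^ 4"
      by (intro power_mono)
    also have "\<dots> = (1 + Cp) ^ 4 * I powr (4 * dp)"
      using I by (simp add: power_mult_distrib powr_pow)
    finally have pq: "(1 + norm (p \<xi>)) ^ 4 \<le> (1 + Cp) ^ 4 * I powr (4 * dp)" .
    have pq0: "(1 + norm (p \<xi>)) ^ 4 > 0" by (smt (verit) norm_ge_zero zero_less_power)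
    have "L \<le> A * I powr (- (4 * dp + 1)) * (1 + norm (p \<xi>)) ^ 4"
      using 1 pq0 by (simp add: field_simps)
    also have "\<dots> \<le> A * I powr (- (4 * dp + 1)) * ((1 + Cp) ^ 4 * I powr (4 * dp))"
      using pq A(1) by (intro mult_left_mono) auto
    also have "\<dots> = A * (1 + Cp) ^ 4 * I powr (- 1)"
      using I by (simp add: powr_add[symmetric] mult_ac)
    finally have "L \<le> A * (1 + Cp) ^ 4 / I" using I by (simp add: powr_minus divide_inverse)
    then have "L * I \<le> A * (1 + Cp) ^ 4" using I by (simp add: field_simps)
    then show ?thesis unfolding Q_def I_def \<xi>_def using L(1) by (simp add: field_simps)
  qed
  define k where "k = nat \<lceil>Q\<rceil>"
  have "1 + real k \<le> Q" using bound[of k] seq1[of k] by simp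
  then show False unfolding k_def by linarith
qed

lemma key_contra:
  assumes ngh: "\<not> globally_hypoelliptic (L0op c p :: 'n coef \<Rightarrow> 'n coef)"
  shows "\<not> globally_hypoelliptic (Lop c p :: 'n coef \<Rightarrow> 'n coef)"
proof -
  have "\<forall>k::nat. \<exists>\<tau> \<xi>. inorm \<xi> \<ge> real k \<and> norm (ss \<tau> \<xi>) \<le> (1 + fnorm (\<tau>, \<xi>)) powr (- real k)"
    using seq_exists[OF ngh] by blast
  then have "\<forall>k::nat. \<exists>z. inorm (snd z) \<ge> real k \<and> norm (ss (fst z) (snd z)) \<le> (1 + fnorm (fst z, snd z)) powr (- real k)"
    by simp
  then obtain f where f: "\<forall>k::nat. inorm (snd (f k)) \<ge> real k \<and> norm (ss (fst (f k)) (snd (f k))) \<le> (1 + fnorm (fst (f k), snd (f k))) powr (- real k)"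
    by (rule choice[THEN exE])
  define tt where "tt k = fst (f k)" for k
  define xx where "xx k = snd (f k)" for k
  have seq: "inorm (xx k) \<ge> real k \<and> norm (ss (tt k) (xx k)) \<le> (1 + fnorm (tt k, xx k)) powr (- real k)" for k
    using f unfolding tt_def xx_def by blast
  have "is_distribution (vv tt xx)" by (rule vv_dist)
  moreover have "is_smooth (Lop c p (vv tt xx))" by (rule vv_lop_smooth) (use seq in auto)
  moreover have "\<not> is_smooth (vv tt xx)" by (rule vv_not_smooth) (use seq in auto)
  ultimately show ?thesis unfolding globally_hypoelliptic_def by blast
qed

end


lemma gh_right:
  assumes "tame A" "globally_hypoelliptic (A \<circ> B)"
  shows "globally_hypoelliptic B"
  using assms tame_smooth unfolding globally_hypoelliptic_def by (metis comp_apply)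

lemma gh_comp:
  assumes "globally_hypoelliptic A" "globally_hypoelliptic B" "tame B"
  shows "globally_hypoelliptic (A \<circ> B)"
  using assms tame_distribution unfolding globally_hypoelliptic_def by (metis comp_apply)

lemma gh_id: "globally_hypoelliptic id" unfolding globally_hypoelliptic_def by simp
lemma gh_id': "globally_hypoelliptic (\<lambda>x. x)" unfolding globally_hypoelliptic_def by simp

lemma comp_list_Cons: "comp_list (f # fs) = f \<circ> comp_list fs"
  by (simp add: comp_list_def)

lemma foldr_comp_shift: "foldr (\<circ>) xs g = foldr (\<circ>) xs id \<circ> g"
  by (induction xs) auto

lemma comp_list_snoc: "comp_list (xs @ [g]) = comp_list xs \<circ> g"
  unfolding comp_list_def by (simp add: foldr_comp_shift[of xs g])

lemma gh_comp_list:
  "(\<And>f. f \<in> set fs \<Longrightarrow> globally_hypoelliptic f \<and> tame f) \<Longrightarrow> globally_hypoelliptic (comp_list fs)"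
proof (induction fs)
  case Nil
  then show ?case by (simp add: comp_list_def gh_id')
next
  case (Cons f fs)
  have "globally_hypoelliptic (f \<circ> comp_list fs)"
    using Cons by (intro gh_comp tame_comp_list) auto
  then show ?case by (simp add: comp_list_Cons o_def)
qed

lemma inorm_comp_le: "real_of_int \<bar>\<xi> $ i\<bar> \<le> inorm \<xi>"
proof -
  have "(real_of_int (\<xi> $ i))\<^sup>2 \<le> (\<Sum>j\<in>UNIV. (real_of_int (\<xi> $ j))\<^sup>2)"
    by (rule member_le_sum) auto
  then show ?thesis unfolding inorm_def by (simp add: real_le_rsqrt)
qed

lemma finite_inorm_ball: "finite {\<xi> :: int ^ ('n::finite). inorm \<xi> \<le> R}"
proof -
  define F where "F = {-\<lceil>R\<rceil>..\<lceil>R\<rceil>}"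
  have "{\<xi> :: int ^ 'n. inorm \<xi> \<le> R} \<subseteq> vec_lambda ` (PiE UNIV (\<lambda>_. F))"
  proof
    fix \<xi> :: "int ^ 'n" assume "\<xi> \<in> {\<xi>. inorm \<xi> \<le> R}"
    then have "real_of_int \<bar>\<xi> $ i\<bar> \<le> R" for i using inorm_comp_le[of \<xi> i] by simp
    have "\<xi> $ i \<in> F" for i
    proof -
      have a: "real_of_int (\<xi> $ i) \<le> R" "- real_of_int (\<xi> $ i) \<le> R"
        using \<open>\<And>i. real_of_int \<bar>\<xi> $ i\<bar> \<le> R\<close>[of i] by auto
      have "\<xi> $ i \<le> \<lceil>R\<rceil>" using a(1) by (simp add: le_ceiling_iff)
      moreover have "- (\<xi> $ i) \<le> \<lceil>R\<rceil>" using a(2) by (simp add: le_ceiling_iff)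
      ultimately show ?thesis unfolding F_def by simp
    qed
    then have "(\<lambda>i. \<xi> $ i) \<in> PiE UNIV (\<lambda>_. F)" by auto
    moreover have "\<xi> = vec_lambda (\<lambda>i. \<xi> $ i)" by simp
    ultimately show "\<xi> \<in> vec_lambda ` (PiE UNIV (\<lambda>_. F))" by blast
  qed
  moreover have "finite (vec_lambda ` (PiE UNIV (\<lambda>_. F)))"
    by (intro finite_imageI finite_PiE) (auto simp: F_def)
  ultimately show ?thesis by (rule finite_subset)
qed

lemma gh_L0_finite:
  fixes p :: "int ^ ('n::finite) \<Rightarrow> complex"
  assumes gh: "globally_hypoelliptic (L0op c p :: 'n coef \<Rightarrow> 'n coef)"
  shows "finite {\<xi>. mean c * p \<xi> \<in> \<int>}"
proof (rule ccontr)
  define S where "S = {\<xi>. mean c * p \<xi> \<in> \<int>}"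
  assume inf: "\<not> finite {\<xi>. mean c * p \<xi> \<in> \<int>}"
  define u :: "'n coef" where "u = (\<lambda>(\<tau>, \<xi>). if \<xi> \<in> S \<and> of_int \<tau> = - (mean c * p \<xi>) then 1 else 0)"
  have ud: "is_distribution u"
  proof -
    have "norm (u \<eta>) \<le> 1 * (1 + fnorm \<eta>) ^ 0" for \<eta> by (cases \<eta>) (auto simp: u_def)
    then show ?thesis unfolding is_distribution_def by blast
  qed
  have "L0op c p u = (\<lambda>_. 0)"
  proof
    fix \<eta> show "L0op c p u \<eta> = 0"
    proof (cases \<eta>)
      case (Pair \<tau> \<xi>)
      then show ?thesis
        by (auto simp: L0op_def Dt_def PDx_def u_def algebra_simps)
    qed
  qed
  then have "is_smooth (L0op c p u)" unfolding is_smooth_def by (auto intro: exI[of _ 0])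
  with gh ud have us: "is_smooth u" unfolding globally_hypoelliptic_def by blast
  then obtain C where C: "\<And>\<eta>. cmod (u \<eta>) \<le> C * (1 + fnorm \<eta>) powr (- real 1)"
    unfolding is_smooth_def by blast
  have "S \<subseteq> {\<xi>. inorm \<xi> \<le> C}"
  proof
    fix \<xi> assume "\<xi> \<in> S"
    then obtain z where z: "mean c * p \<xi> = of_int z" unfolding S_def by (auto elim: Ints_cases)
    have "u (-z, \<xi>) = 1" using \<open>\<xi> \<in> S\<close> z by (simp add: u_def)
    then have "1 \<le> C * (1 + fnorm (-z, \<xi>)) powr (- 1)" using C[of "(-z, \<xi>)"] by simp
    then have "1 + fnorm (-z, \<xi>) \<le> C" using fnorm_nonneg[of "(-z, \<xi>)"]
      by (simp add: powr_minus field_simps add_pos_nonneg)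
    then show "\<xi> \<in> {\<xi>. inorm \<xi> \<le> C}" using inorm_le_fnorm[of \<xi> "-z"] by simp
  qed
  then have "finite S" using finite_inorm_ball finite_subset by blast
  then show False using inf S_def by simp
qed

lemma key_gh:
  fixes p :: "int ^ ('n::finite) \<Rightarrow> complex"
  assumes "smooth_periodic c" "pgrowth p" "globally_hypoelliptic (Lop c p :: 'n coef \<Rightarrow> 'n coef)"
  shows "globally_hypoelliptic (L0op c p :: 'n coef \<Rightarrow> 'n coef)"
  using key_contra[OF assms(1,2)] assms(3) by blast

theorem proposition4:
  fixes m :: nat
    and c :: "nat \<Rightarrow> real \<Rightarrow> complex"
    and p :: "nat \<Rightarrow> int ^ 'n \<Rightarrow> complex"
  assumes m_pos: "m \<ge> 1"
    and c_smooth: "\<forall>j<m. smooth_periodic (c j)"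
    and p_growth: "\<forall>j<m. \<exists>C>0. \<exists>\<nu>::real. \<forall>\<xi>. \<xi> \<noteq> 0 \<longrightarrow> cmod (p j \<xi>) \<le> C * inorm \<xi> powr \<nu>"
  shows "((\<forall>\<rho>. \<rho> permutes {..<m} \<longrightarrow>
            globally_hypoelliptic (comp_list (map (\<lambda>i. Lop (c (\<rho> i)) (p (\<rho> i))) [0..<m])))
          \<longrightarrow> globally_hypoelliptic (comp_list (map (\<lambda>j. L0op (c j) (p j)) [0..<m]))
              \<and> (\<forall>k<m. finite {\<xi>. mean (c k) * p k \<xi> \<in> \<int>}))
       \<and> ((\<exists>\<rho>. \<rho> permutes {..<m} \<and>
            globally_hypoelliptic (comp_list (map (\<lambda>i. Lop (c (\<rho> i)) (p (\<rho> i))) [0..<m])))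
          \<longrightarrow> (\<exists>k<m. globally_hypoelliptic (L0op (c k) (p k))))"
proof -
  have pg: "pgrowth (p j)" if "j < m" for j using p_growth that unfolding pgrowth_def by blast
  have upt: "[0..<m] = [0..<m-1] @ [m-1]" using m_pos by (cases m) auto
  have last: "globally_hypoelliptic (Lop (c (\<rho> (m-1))) (p (\<rho> (m-1))))"
    if \<rho>: "\<rho> permutes {..<m}" and gh: "globally_hypoelliptic (comp_list (map (\<lambda>i. Lop (c (\<rho> i)) (p (\<rho> i))) [0..<m]))"
    for \<rho>
  proof -
    have inr: "\<rho> i < m" if "i < m" for i using permutes_in_image[OF \<rho>, of i] that by simp
    have "comp_list (map (\<lambda>i. Lop (c (\<rho> i)) (p (\<rho> i))) [0..<m]) =
          comp_list (map (\<lambda>i. Lop (c (\<rho> i)) (p (\<rho> i))) [0..<m-1]) \<circ> Lop (c (\<rho> (m-1))) (p (\<rho> (m-1)))"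
      by (subst upt) (simp add: comp_list_snoc)
    moreover have "tame (comp_list (map (\<lambda>i. Lop (c (\<rho> i)) (p (\<rho> i))) [0..<m-1]))"
    proof (rule tame_comp_list)
      fix f assume "f \<in> set (map (\<lambda>i. Lop (c (\<rho> i)) (p (\<rho> i))) [0..<m-1])"
      then obtain i where i: "i < m - 1" "f = Lop (c (\<rho> i)) (p (\<rho> i))" by auto
      then have "\<rho> i < m" using inr by simp
      then show "tame f" unfolding i(2) using c_smooth pg by (intro tame_Lop) auto
    qed
    ultimately show ?thesis using gh_right[of _ "Lop (c (\<rho> (m-1))) (p (\<rho> (m-1)))"] gh by simp
  qed
  show ?thesis
  proof (intro conjI impI)
    assume all: "\<forall>\<rho>. \<rho> permutes {..<m} \<longrightarrow>
            globally_hypoelliptic (comp_list (map (\<lambda>i. Lop (c (\<rho> i)) (p (\<rho> i))) [0..<m]))"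
    have ghj: "globally_hypoelliptic (L0op (c j) (p j))" if j: "j < m" for j
    proof -
      define \<rho> where "\<rho> = Transposition.transpose j (m-1)"
      have \<rho>: "\<rho> permutes {..<m}" unfolding \<rho>_def using j m_pos by (intro permutes_swap_id) auto
      have "\<rho> (m-1) = j" by (simp add: \<rho>_def)
      have "globally_hypoelliptic (comp_list (map (\<lambda>i. Lop (c (\<rho> i)) (p (\<rho> i))) [0..<m]))"
        using all \<rho> by blast
      from last[OF \<rho> this] \<open>\<rho> (m-1) = j\<close> have "globally_hypoelliptic (Lop (c j) (p j))" by simp
      then show ?thesis using key_gh[OF c_smooth[rule_format, OF j] pg[OF j]] by blast
    qed
    show "globally_hypoelliptic (comp_list (map (\<lambda>j. L0op (c j) (p j)) [0..<m]))"
    proof (rule gh_comp_list)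
      fix f assume "f \<in> set (map (\<lambda>j. L0op (c j) (p j)) [0..<m])"
      then obtain j where j: "j < m" "f = L0op (c j) (p j)" by auto
      show "globally_hypoelliptic f \<and> tame f" unfolding j(2) using ghj[OF j(1)] tame_L0op[OF pg[OF j(1)]] by blast
    qed
    show "\<forall>k<m. finite {\<xi>. mean (c k) * p k \<xi> \<in> \<int>}"
    proof (intro allI impI)
      fix k assume "k < m"
      from gh_L0_finite[OF ghj[OF this]] show "finite {\<xi>. mean (c k) * p k \<xi> \<in> \<int>}" .
    qed
  next
    assume "\<exists>\<rho>. \<rho> permutes {..<m} \<and>
            globally_hypoelliptic (comp_list (map (\<lambda>i. Lop (c (\<rho> i)) (p (\<rho> i))) [0..<m]))"
    then obtain \<rho> where \<rho>: "\<rho> permutes {..<m}"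
      and gh: "globally_hypoelliptic (comp_list (map (\<lambda>i. Lop (c (\<rho> i)) (p (\<rho> i))) [0..<m]))" by blast
    have k: "\<rho> (m-1) < m" using permutes_in_image[OF \<rho>, of "m-1"] m_pos by simp
    have "globally_hypoelliptic (Lop (c (\<rho> (m-1))) (p (\<rho> (m-1))))" by (rule last[OF \<rho> gh])
    then have "globally_hypoelliptic (L0op (c (\<rho> (m-1))) (p (\<rho> (m-1))))"
      using key_gh[OF c_smooth[rule_format, OF k] pg[OF k]] by blast
    then show "\<exists>k<m. globally_hypoelliptic (L0op (c k) (p k))" using k by blast
  qed
qed


end
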